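(* Let $V$ be a complex vector space of dimension $2m+1$ with a non-degenerate symmetric bilinear form $g_{ab}$, $S$ a spinor representation with $\gamma$-matrices $\gamma_{aA}{}^B$, and let $\alpha^A,\beta^A\in S$ be two pure spinors not proportional to each other. Then: (i) the $\gamma$-planes associated to $\alpha^A$ and $\beta^A$ intersect in a totally null $(m-1)$-dimensional subspace if and only if $$\alpha^{aA}\beta_a{}^B=\alpha^A\beta^B-2\,\beta^A\alpha^B=-\alpha^{(A}\beta^{B)}+3\,\alpha^{[A}\beta^{B]};$$ (ii) the $\gamma$-planes associated to $\alpha^A$ and $\beta^A$ intersect in a totally null $(m-k)$-dimensional subspace with $k=1$ or $k=2$ if and only if $$\alpha^{a(A}\beta_a{}^{B)}=-\alpha^{(A}\beta^{B)}.$$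
   Context: Abstract index notation: lower-case indices for $V$ (raised/lowered with $g$), upper-case indices for the spinor space $S$ (dimension $2^m$), raised/lowered with a spin-invariant bilinear form. The $\gamma$-matrices satisfy $\gamma_{(a|A}{}^C\gamma_{|b)C}{}^B=-g_{ab}\delta_A{}^B$. For a spinor $\alpha^A$ write $\alpha_a{}^A:=\alpha^B\gamma_{aB}{}^A$. A non-zero spinor $\alpha^A$ is pure if the kernel of the map $V\to S$, $X^a\mapsto X^a\alpha_a{}^A$, has dimension $m$; this kernel (a totally null $m$-dimensional subspace) is the $\gamma$-plane associated to $\alpha^A$. Round/square brackets denote symmetrisation/skew-symmetrisation. *)

theory Defs
  imports "HOL-Analysis.Analysis"
begin

text \<open>Coordinates: V = complex^'i (index a), S = complex^'j (index A).
  The metric g_ab is a matrix g $ a $ b; gamma a $ A $ B is gamma_{aA}^B.\<close>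

definition bilin :: "complex^'i::finite^'i \<Rightarrow> complex^'i \<Rightarrow> complex^'i \<Rightarrow> complex" where
  "bilin g X Y = (\<Sum>a\<in>UNIV. \<Sum>b\<in>UNIV. g $ a $ b * X $ a * Y $ b)"

definition clifford_rel :: "complex^'i::finite^'i \<Rightarrow> ('i::finite \<Rightarrow> complex^'j::finite^'j) \<Rightarrow> bool" where
  "clifford_rel g \<gamma> \<longleftrightarrow> (\<forall>a b A B.
     ((\<Sum>C\<in>UNIV. \<gamma> a $ A $ C * \<gamma> b $ C $ B) + (\<Sum>C\<in>UNIV. \<gamma> b $ A $ C * \<gamma> a $ C $ B)) / 2
       = - g $ a $ b * (if A = B then 1 else 0))"

text \<open>alpha_a^A = alpha^B gamma_{aB}^A\<close>
definition spin_act :: "('i::finite \<Rightarrow> complex^'j::finite^'j) \<Rightarrow> complex^'j \<Rightarrow> 'i \<Rightarrow> complex^'j" where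
  "spin_act \<gamma> \<alpha> a = (\<chi> A. \<Sum>B\<in>UNIV. \<alpha> $ B * \<gamma> a $ B $ A)"

definition gamma_plane :: "('i::finite \<Rightarrow> complex^'j::finite^'j) \<Rightarrow> complex^'j \<Rightarrow> (complex^'i) set" where
  "gamma_plane \<gamma> \<alpha> = {X. (\<Sum>a\<in>UNIV. X $ a *s spin_act \<gamma> \<alpha> a) = 0}"

definition pure_spinor :: "('i::finite \<Rightarrow> complex^'j::finite^'j) \<Rightarrow> nat \<Rightarrow> complex^'j \<Rightarrow> bool" where
  "pure_spinor \<gamma> m \<alpha> \<longleftrightarrow> \<alpha> \<noteq> 0 \<and> vec.dim (gamma_plane \<gamma> \<alpha>) = m"

definition totally_null :: "complex^'i::finite^'i \<Rightarrow> (complex^'i) set \<Rightarrow> bool" where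
  "totally_null g W \<longleftrightarrow> (\<forall>X\<in>W. \<forall>Y\<in>W. bilin g X Y = 0)"

text \<open>alpha^{aA} beta_a^B = g^{ab} alpha_a^A beta_b^B\<close>
definition contr :: "complex^'i::finite^'i \<Rightarrow> ('i::finite \<Rightarrow> complex^'j::finite^'j) \<Rightarrow> complex^'j \<Rightarrow> complex^'j \<Rightarrow> complex^'j^'j" where
  "contr g \<gamma> \<alpha> \<beta> = (\<chi> A B. \<Sum>a\<in>UNIV. \<Sum>b\<in>UNIV.
      matrix_inv g $ a $ b * spin_act \<gamma> \<alpha> a $ A * spin_act \<gamma> \<beta> b $ B)"

end

theory Submission
  imports Defs
begin

definition dotc :: "complex^'n::finite \<Rightarrow> complex^'n \<Rightarrow> complex" where
  "dotc x y = (\<Sum>a\<in>UNIV. x$a * y$a)"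

definition act :: "('i::finite \<Rightarrow> complex^'j::finite^'j) \<Rightarrow> complex^'j \<Rightarrow> complex^'i \<Rightarrow> complex^'j" where
  "act \<gamma> \<psi> X = (\<chi> A. \<Sum>a\<in>UNIV. \<Sum>B\<in>UNIV. X$a * \<psi>$B * \<gamma> a $ B $ A)"

lemma act_comp: "act \<gamma> \<psi> X $ A = (\<Sum>a\<in>UNIV. \<Sum>B\<in>UNIV. X$a * \<psi>$B * \<gamma> a $ B $ A)"
  by (simp add: act_def)

lemma act_eq: "act \<gamma> \<psi> X = (\<Sum>a\<in>UNIV. X$a *s spin_act \<gamma> \<psi> a)"
  by (simp add: vec_eq_iff act_def spin_act_def sum_distrib_left mult.assoc)

lemma act_zero1[simp]: "act \<gamma> 0 X = 0"
  by (simp add: vec_eq_iff act_def)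

lemma act_zero2[simp]: "act \<gamma> \<psi> 0 = 0"
  by (simp add: vec_eq_iff act_def)

lemma act_add1: "act \<gamma> (\<psi> + \<phi>) X = act \<gamma> \<psi> X + act \<gamma> \<phi> X"
  by (simp add: vec_eq_iff act_def distrib_left distrib_right sum.distrib)

lemma act_scale1: "act \<gamma> (c *s \<psi>) X = c *s act \<gamma> \<psi> X"
  by (simp add: vec_eq_iff act_def sum_distrib_left mult_ac)

lemma act_sum1: "act \<gamma> (\<Sum>l\<in>L. f l) X = (\<Sum>l\<in>L. act \<gamma> (f l) X)"
  by (induction L rule: infinite_finite_induct) (simp_all add: act_add1)

lemma act_add2: "act \<gamma> \<psi> (X + Y) = act \<gamma> \<psi> X + act \<gamma> \<psi> Y"
  by (simp add: vec_eq_iff act_def distrib_left distrib_right sum.distrib)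

lemma act_scale2: "act \<gamma> \<psi> (c *s X) = c *s act \<gamma> \<psi> X"
  by (simp add: vec_eq_iff act_def sum_distrib_left mult_ac)

lemma act_sum2: "act \<gamma> \<psi> (\<Sum>l\<in>L. f l) = (\<Sum>l\<in>L. act \<gamma> \<psi> (f l))"
  by (induction L rule: infinite_finite_induct) (simp_all add: act_add2)

lemma act_neg1: "act \<gamma> (- \<psi>) X = - act \<gamma> \<psi> X"
  by (simp add: vec_eq_iff act_def sum_negf)

lemma act_diff1: "act \<gamma> (\<psi> - \<phi>) X = act \<gamma> \<psi> X - act \<gamma> \<phi> X"
  by (simp add: vec_eq_iff act_def algebra_simps sum_subtractf)

lemma gamma_plane_act: "gamma_plane \<gamma> \<alpha> = {X. act \<gamma> \<alpha> X = 0}"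
  by (simp add: gamma_plane_def act_eq)

lemma bilin_dot: "bilin g X Y = dotc X (g *v Y)"
  by (simp add: bilin_def dotc_def matrix_vector_mult_def sum_distrib_left mult_ac)

lemma sum3_rev: "(\<Sum>C\<in>(UNIV::'c::finite set). \<Sum>B\<in>(UNIV::'b::finite set). \<Sum>a\<in>(UNIV::'a::finite set). f a B C)
   = (\<Sum>a\<in>UNIV. \<Sum>B\<in>UNIV. \<Sum>C\<in>UNIV. f a B C)"
proof -
  have "(\<Sum>C\<in>(UNIV::'c set). \<Sum>B\<in>(UNIV::'b set). \<Sum>a\<in>(UNIV::'a set). f a B C)
      = (\<Sum>C\<in>(UNIV::'c set). \<Sum>a\<in>UNIV. \<Sum>B\<in>UNIV. f a B C)"
    by (rule sum.cong[OF refl], rule sum.swap)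
  also have "\<dots> = (\<Sum>a\<in>UNIV. \<Sum>C\<in>UNIV. \<Sum>B\<in>UNIV. f a B C)" by (rule sum.swap)
  also have "\<dots> = (\<Sum>a\<in>UNIV. \<Sum>B\<in>UNIV. \<Sum>C\<in>UNIV. f a B C)"
    by (rule sum.cong[OF refl], rule sum.swap)
  finally show ?thesis .
qed

lemma sum3_rot: "(\<Sum>C\<in>(UNIV::'c::finite set). \<Sum>a\<in>(UNIV::'a::finite set). \<Sum>B\<in>(UNIV::'b::finite set). f a B C)
   = (\<Sum>a\<in>UNIV. \<Sum>B\<in>UNIV. \<Sum>C\<in>UNIV. f a B C)"
proof -
  have "(\<Sum>C\<in>(UNIV::'c set). \<Sum>a\<in>(UNIV::'a set). \<Sum>B\<in>(UNIV::'b set). f a B C)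
      = (\<Sum>a\<in>UNIV. \<Sum>C\<in>UNIV. \<Sum>B\<in>UNIV. f a B C)" by (rule sum.swap)
  also have "\<dots> = (\<Sum>a\<in>UNIV. \<Sum>B\<in>UNIV. \<Sum>C\<in>UNIV. f a B C)"
    by (rule sum.cong[OF refl], rule sum.swap)
  finally show ?thesis .
qed

lemma act_act_comp: "act \<gamma> (act \<gamma> \<psi> X) Y $ A =
   (\<Sum>a\<in>UNIV. \<Sum>b\<in>UNIV. \<Sum>B\<in>UNIV. X$a * Y$b * \<psi>$B * (\<Sum>C\<in>UNIV. \<gamma> a $ B $ C * \<gamma> b $ C $ A))"
proof -
  have "act \<gamma> (act \<gamma> \<psi> X) Y $ A = (\<Sum>b\<in>UNIV. \<Sum>C\<in>UNIV. \<Sum>a\<in>UNIV. \<Sum>B\<in>UNIV. Y$b * (X$a * \<psi>$B * \<gamma> a $ B $ C) * \<gamma> b $ C $ A)"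
    by (simp add: act_def sum_distrib_left sum_distrib_right)
  also have "\<dots> = (\<Sum>b\<in>UNIV. \<Sum>a\<in>UNIV. \<Sum>B\<in>UNIV. \<Sum>C\<in>UNIV. Y$b * (X$a * \<psi>$B * \<gamma> a $ B $ C) * \<gamma> b $ C $ A)"
    by (rule sum.cong[OF refl], rule sum3_rot)
  also have "\<dots> = (\<Sum>a\<in>UNIV. \<Sum>b\<in>UNIV. \<Sum>B\<in>UNIV. \<Sum>C\<in>UNIV. Y$b * (X$a * \<psi>$B * \<gamma> a $ B $ C) * \<gamma> b $ C $ A)"
    by (rule sum.swap)
  also have "\<dots> = (\<Sum>a\<in>UNIV. \<Sum>b\<in>UNIV. \<Sum>B\<in>UNIV. X$a * Y$b * \<psi>$B * (\<Sum>C\<in>UNIV. \<gamma> a $ B $ C * \<gamma> b $ C $ A))"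
    by (simp add: sum_distrib_left mult_ac)
  finally show ?thesis .
qed

definition indep :: "(nat \<Rightarrow> 'a::field^'n::finite) \<Rightarrow> nat \<Rightarrow> bool" where
  "indep v p \<longleftrightarrow> (\<forall>c. (\<Sum>i<p. c i *s v i) = 0 \<longrightarrow> (\<forall>i<p. c i = 0))"

lemma indep_inj:
  assumes "indep v p" shows "inj_on v {..<p}"
proof (rule inj_onI, rule ccontr)
  fix i j assume ij: "i \<in> {..<p}" "j \<in> {..<p}" "v i = v j" "i \<noteq> j"
  define c where "c = (\<lambda>k. if k = i then (1::'a) else if k = j then -1 else 0)"
  have "(\<Sum>k<p. c k *s v k) = (\<Sum>k\<in>{i,j}. c k *s v k)"
    by (rule sum.mono_neutral_right) (use ij in \<open>auto simp: c_def\<close>)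
  also have "\<dots> = 0" using ij by (simp add: c_def)
  finally have "c i = 0" using assms ij unfolding indep_def by blast
  then show False by (simp add: c_def)
qed

lemma indep_set:
  assumes "indep v p" shows "vec.independent (v ` {..<p})"
proof -
  have inj: "inj_on v {..<p}" using indep_inj[OF assms] .
  show ?thesis
  proof (subst vec.independent_explicit, intro conjI allI impI ballI)
    show "finite (v ` {..<p})" using finite_lessThan[of p] by (rule finite_imageI)
  next
    fix c x assume s: "(\<Sum>y\<in>v ` {..<p}. c y *s y) = 0" and x: "x \<in> v ` {..<p}"
    have "(\<Sum>i<p. (c \<circ> v) i *s v i) = 0" using s by (simp add: sum.reindex[OF inj])
    then show "c x = 0" using assms x unfolding indep_def by auto
  qed
qed

lemma indep_card: "indep v p \<Longrightarrow> card (v ` {..<p}) = p"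
  using indep_inj card_image by fastforce

lemma indep_bound: "indep (v :: nat \<Rightarrow> 'a::field^'n::finite) p \<Longrightarrow> p \<le> CARD('n)"
  using vec.independent_card_le_dim[of "v ` {..<p}" UNIV] indep_set indep_card vec_dim_card
  by (metis subset_UNIV)

lemma span_family: "vec.span ((v :: nat \<Rightarrow> 'a::field^'n::finite) ` {..<p}) = {z. \<exists>c. z = (\<Sum>i<p. c i *s v i)}" if "inj_on v {..<p}"
proof -
  have "vec.span (v ` {..<p}) = range (\<lambda>u. \<Sum>x\<in>v ` {..<p}. u x *s x)"
    by (rule vec.span_finite) simp
  also have "\<dots> = {z. \<exists>c. z = (\<Sum>i<p. c i *s v i)}"
  proof (intro set_eqI iffI)
    fix z assume "z \<in> range (\<lambda>u. \<Sum>x\<in>v ` {..<p}. u x *s x)"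
    then obtain u where "z = (\<Sum>x\<in>v ` {..<p}. u x *s x)" by blast
    then have "z = (\<Sum>i<p. (u \<circ> v) i *s v i)" by (simp add: sum.reindex[OF that])
    then show "z \<in> {z. \<exists>c. z = (\<Sum>i<p. c i *s v i)}" by blast
  next
    fix z assume "z \<in> {z. \<exists>c. z = (\<Sum>i<p. c i *s v i)}"
    then obtain c where z: "z = (\<Sum>i<p. c i *s v i)" by blast
    have "z = (\<Sum>x\<in>v ` {..<p}. c (the_inv_into {..<p} v x) *s x)"
      unfolding z by (subst sum.reindex[OF that]) (auto simp: the_inv_into_f_f[OF that])
    then show "z \<in> range (\<lambda>u. \<Sum>x\<in>v ` {..<p}. u x *s x)"
      unfolding image_iff by (rule bexI[of _ "\<lambda>x. c (the_inv_into {..<p} v x)"]) simp_all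
  qed
  finally show ?thesis .
qed

lemma indep_span_all:
  assumes "indep (v :: nat \<Rightarrow> 'a::field^'n::finite) (CARD('n))"
  shows "\<exists>c. z = (\<Sum>i<CARD('n). c i *s v i)"
proof -
  have "UNIV \<subseteq> vec.span (v ` {..<CARD('n)})"
    using vec.card_eq_dim[of "v ` {..<CARD('n)}" UNIV] indep_set[OF assms] indep_card[OF assms]
    by (simp add: vec_dim_card card_cart_basis)
  then show ?thesis using span_family[OF indep_inj[OF assms]] by auto
qed

lemma subspace_basis:
  assumes "vec.subspace W"
  shows "\<exists>v. indep v (vec.dim W) \<and> (\<forall>i<vec.dim W. v i \<in> W) \<and> (\<forall>w\<in>W. \<exists>c. w = (\<Sum>i<vec.dim W. c i *s v i))"
proof -
  obtain B where B: "B \<subseteq> W" "vec.independent B" "W \<subseteq> vec.span B" "card B = vec.dim W"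
    using vec.basis_exists by blast
  have fB: "finite B" using B(2) vec.finiteI_independent by blast
  obtain h where h: "bij_betw h {..<vec.dim W} B"
    using ex_bij_betw_nat_finite[OF fB] B(4) by (metis atLeast0LessThan)
  have inj: "inj_on h {..<vec.dim W}" and img: "h ` {..<vec.dim W} = B"
    using h by (auto simp: bij_betw_def)
  have "indep h (vec.dim W)"
    unfolding indep_def
  proof (intro allI impI)
    fix c i assume s: "(\<Sum>i<vec.dim W. c i *s h i) = 0" and i: "i < vec.dim W"
    let ?c = "\<lambda>x. c (the_inv_into {..<vec.dim W} h x)"
    have "(\<Sum>x\<in>B. ?c x *s x) = (\<Sum>i<vec.dim W. c i *s h i)"
      unfolding img[symmetric] by (subst sum.reindex[OF inj]) (auto simp: the_inv_into_f_f[OF inj])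
    moreover have indB: "\<forall>c. (\<Sum>v\<in>B. c v *s v) = 0 \<longrightarrow> (\<forall>v\<in>B. c v = 0)"
      using B(2) vec.independent_explicit by blast
    ultimately have "\<forall>x\<in>B. ?c x = 0" using s indB[rule_format, of ?c] by simp
    then have "?c (h i) = 0" using img i by auto
    then show "c i = 0" using the_inv_into_f_f[OF inj] i by auto
  qed
  moreover have "\<forall>i<vec.dim W. h i \<in> W" using img B(1) by auto
  moreover have "\<forall>w\<in>W. \<exists>c. w = (\<Sum>i<vec.dim W. c i *s h i)"
    using B(3) span_family[OF inj] img by auto
  ultimately show ?thesis by blast
qed

lemma indep_extend:
  assumes "indep v p" "\<forall>i<p. v i \<in> W" "p < vec.dim W"
  shows "\<exists>w\<in>W. indep (v(p:=w)) (Suc p)"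
proof -
  have inj: "inj_on v {..<p}" using indep_inj[OF assms(1)] .
  have "\<not> W \<subseteq> vec.span (v ` {..<p})"
  proof
    assume "W \<subseteq> vec.span (v ` {..<p})"
    then have "vec.dim W \<le> card (v ` {..<p})" by (rule vec.dim_le_card) simp
    then show False using indep_card[OF assms(1)] assms(3) by simp
  qed
  then obtain w where w: "w \<in> W" "w \<notin> vec.span (v ` {..<p})" by blast
  have "indep (v(p:=w)) (Suc p)"
    unfolding indep_def
  proof (intro allI impI)
    fix c i assume s: "(\<Sum>i<Suc p. c i *s (v(p:=w)) i) = 0" and i: "i < Suc p"
    have "c p *s w + (\<Sum>i<p. c i *s v i) = 0"
      using s by (simp add: lessThan_Suc sum.cong[of "{..<p}" "{..<p}" "\<lambda>i. c i *s (v(p:=w)) i" "\<lambda>i. c i *s v i"])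
    then have s2: "(\<Sum>i<p. c i *s v i) + c p *s w = 0" by (simp add: add.commute)
    have cp: "c p = 0"
    proof (rule ccontr)
      assume cp: "c p \<noteq> 0"
      have "w = (- inverse (c p)) *s (\<Sum>i<p. c i *s v i)"
        using s2 cp by (simp add: vec_eq_iff field_simps add_eq_0_iff)
      also have "\<dots> \<in> vec.span (v ` {..<p})"
        by (intro vec.span_scale vec.span_sum) (auto intro: vec.span_base)
      finally show False using w by simp
    qed
    then have "(\<Sum>i<p. c i *s v i) = 0" using s2 by simp
    then have "\<forall>i<p. c i = 0" using assms(1) unfolding indep_def by blast
    then show "c i = 0" using cp i less_Suc_eq by auto
  qed
  then show ?thesis using w by blast
qed

lemma sum_mult_delta: "finite S \<Longrightarrow> (\<Sum>i\<in>S. f i * (if i = l then 1 else 0)) = (if l \<in> S then f l else (0::'a::comm_semiring_1))"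
proof -
  assume fin: "finite S"
  have e: "(\<lambda>i. f i * (if i = l then 1 else 0)) = (\<lambda>i. if i = l then f i else 0)" by auto
  show ?thesis unfolding e using fin by simp
qed

lemma sum_mult_delta': "finite S \<Longrightarrow> (\<Sum>i\<in>S. f i * (if l = i then 1 else 0)) = (if l \<in> S then f l else (0::'a::comm_semiring_1))"
proof -
  assume fin: "finite S"
  have e: "(\<lambda>i. f i * (if l = i then 1 else 0)) = (\<lambda>i. if i = l then f i else 0)" by auto
  show ?thesis unfolding e using fin by simp
qed

lemma sum_delta_nat: "(\<Sum>i<(p::nat). a i * (if l = i then 1 else 0)) = (if l < p then a l else (0::'a::comm_semiring_1))"
  using sum_mult_delta'[of "{..<p}" a l] by simp

lemma sum_delta_nat': "(\<Sum>i<(p::nat). a i * (if i = l then 1 else 0)) = (if l < p then a l else (0::'a::comm_semiring_1))"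
  using sum_mult_delta[of "{..<p}" a l] by simp

lemma bilin_add1: "bilin g (X + Y) Z = bilin g X Z + bilin g Y Z"
  by (simp add: bilin_def algebra_simps sum.distrib)
lemma bilin_add2: "bilin g Z (X + Y) = bilin g Z X + bilin g Z Y"
  by (simp add: bilin_def algebra_simps sum.distrib)
lemma bilin_scale1: "bilin g (c *s X) Z = c * bilin g X Z"
  by (simp add: bilin_def sum_distrib_left mult_ac)
lemma bilin_scale2: "bilin g Z (c *s X) = c * bilin g Z X"
  by (simp add: bilin_def sum_distrib_left mult_ac)
lemma bilin_zero1[simp]: "bilin g 0 Z = 0"
  by (simp add: bilin_def)
lemma bilin_zero2[simp]: "bilin g Z 0 = 0"
  by (simp add: bilin_def)
lemma bilin_diff1: "bilin g (X - Y) Z = bilin g X Z - bilin g Y Z"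
  by (simp add: bilin_def algebra_simps sum_subtractf)
lemma bilin_diff2: "bilin g Z (X - Y) = bilin g Z X - bilin g Z Y"
  by (simp add: bilin_def algebra_simps sum_subtractf)
lemma bilin_neg1: "bilin g (- X) Z = - bilin g X Z"
  by (simp add: bilin_def sum_negf)
lemma bilin_neg2: "bilin g Z (- X) = - bilin g Z X"
  by (simp add: bilin_def sum_negf)
lemma bilin_sum1: "bilin g (\<Sum>l\<in>L. f l) Z = (\<Sum>l\<in>L. bilin g (f l) Z)"
  by (induction L rule: infinite_finite_induct) (simp_all add: bilin_add1)
lemma bilin_sum2: "bilin g Z (\<Sum>l\<in>L. f l) = (\<Sum>l\<in>L. bilin g Z (f l))"
  by (induction L rule: infinite_finite_induct) (simp_all add: bilin_add2)

lemmas bilin_lin = bilin_add1 bilin_add2 bilin_scale1 bilin_scale2 bilin_diff1 bilin_diff2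
  bilin_neg1 bilin_neg2 bilin_sum1 bilin_sum2

lemma bilin_sym:
  assumes t: "transpose g = g" shows "bilin g X Y = bilin g Y X"
proof -
  have gs: "\<And>a b. g $ b $ a = g $ a $ b"
    by (metis t transpose_def vec_lambda_beta)
  show ?thesis unfolding bilin_def by (subst sum.swap) (simp add: gs mult_ac)
qed

lemma matrix_inv_props:
  assumes "invertible (A::'a::semiring_1^'n^'n)"
  shows "A ** matrix_inv A = mat 1 \<and> matrix_inv A ** A = mat 1"
  using assms unfolding invertible_def matrix_inv_def by (rule someI_ex)

lemma bilin_nondeg:
  assumes "invertible g" "\<forall>Y. bilin g X Y = 0" shows "X = 0"
proof (rule vec_eq_iff[THEN iffD2], rule allI)
  fix b
  let ?Y = "matrix_inv g *v axis b 1"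
  have "g *v ?Y = axis b 1"
    using matrix_inv_props[OF assms(1)] by (simp add: matrix_vector_mul_assoc)
  then have "bilin g X ?Y = X $ b"
    by (simp add: bilin_dot dotc_def axis_def sum_mult_delta)
  then show "X $ b = 0 $ b" using assms(2) by simp
qed

lemma sum_lessThan_add: "(\<Sum>i<a+(b::nat). f i) = (\<Sum>i<a. f i) + (\<Sum>i<b. f (a+i))"
  by (induction b) (simp_all add: add.assoc)


lemma dotc_add1: "dotc (x + y) z = dotc x z + dotc y z"
  by (simp add: dotc_def algebra_simps sum.distrib)
lemma dotc_scale1: "dotc (c *s x) z = c * dotc x z"
  by (simp add: dotc_def sum_distrib_left mult_ac)
lemma dotc_zero1[simp]: "dotc 0 z = 0"
  by (simp add: dotc_def)
lemma dotc_sum1: "dotc (\<Sum>l\<in>L. f l) z = (\<Sum>l\<in>L. dotc (f l) z)"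
  by (induction L rule: infinite_finite_induct) (simp_all add: dotc_add1)

lemma dotc_mv: "dotc (M *v x) y = dotc x (transpose M *v y)"
  unfolding dotc_def matrix_vector_mult_def transpose_def
  by (simp add: sum_distrib_left sum_distrib_right mult_ac) (rule sum.swap)

lemma dual_indep:
  assumes "\<forall>k<N. \<forall>l<N. bilin g (f k) (fs l) = (if k = l then 1 else 0)"
  shows "indep fs N"
  unfolding indep_def
proof (intro allI impI)
  fix c k assume s: "(\<Sum>l<N. c l *s fs l) = 0" and k: "k < N"
  have "0 = bilin g (f k) (\<Sum>l<N. c l *s fs l)" using s by simp
  also have "\<dots> = (\<Sum>l<N. c l * (if k = l then 1 else 0))"
    by (simp add: bilin_sum2 bilin_scale2) (rule sum.cong, auto simp: assms k)
  also have "\<dots> = c k" using k by (simp add: sum_delta_nat)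
  finally show "c k = 0" by simp
qed

lemma extend_to:
  assumes "indep v p" "\<forall>i<p. v i \<in> W" "p \<le> d" "d \<le> vec.dim W"
  shows "\<exists>v'. indep v' d \<and> (\<forall>i<p. v' i = v i) \<and> (\<forall>i<d. v' i \<in> W)"
  using assms(3,4)
proof (induction d)
  case 0 then show ?case using assms(1,2) by (intro exI[of _ v]) auto
next
  case (Suc d)
  show ?case
  proof (cases "p = Suc d")
    case True then show ?thesis using assms(1,2) by (intro exI[of _ v]) auto
  next
    case False
    then have "p \<le> d" "d \<le> vec.dim W" using Suc.prems by auto
    then obtain v' where v': "indep v' d" "\<forall>i<p. v' i = v i" "\<forall>i<d. v' i \<in> W"
      using Suc.IH by blast
    obtain w where w: "w \<in> W" "indep (v'(d:=w)) (Suc d)"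
      using indep_extend[OF v'(1) v'(3)] Suc.prems by auto
    have "\<forall>i<p. (v'(d:=w)) i = v i" using v' \<open>p \<le> d\<close> by auto
    moreover have "\<forall>i<Suc d. (v'(d:=w)) i \<in> W" using v' w by (auto simp: less_Suc_eq)
    ultimately show ?thesis using w(2) by blast
  qed
qed

definition cat :: "nat \<Rightarrow> (nat \<Rightarrow> 'a) \<Rightarrow> (nat \<Rightarrow> 'a) \<Rightarrow> nat \<Rightarrow> 'a" where
  "cat p v w i = (if i < p then v i else w (i - p))"

lemma sum_cat: "(\<Sum>i<p+q. c i *s cat p v w i) = (\<Sum>i<p. c i *s v i) + (\<Sum>i<q. c (p+i) *s w i)"
  unfolding sum_lessThan_add cat_def by simp

lemma cat_indep:
  assumes v: "indep v p"
    and t1: "\<forall>l<q. \<forall>i<p. bilin g (t l) (v i) = 0"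
    and t2: "\<forall>l<q. \<forall>j<q. bilin g (t l) (w j) = (if l = j then 1 else 0)"
  shows "indep (cat p v w) (p + q)"
  unfolding indep_def
proof (intro allI impI)
  fix c i assume s: "(\<Sum>i<p+q. c i *s cat p v w i) = 0" and i: "i < p + q"
  have s2: "(\<Sum>i<p. c i *s v i) + (\<Sum>i<q. c (p+i) *s w i) = 0"
    using s unfolding sum_cat .
  have d: "c (p + l) = 0" if l: "l < q" for l
  proof -
    have "bilin g (t l) ((\<Sum>i<p. c i *s v i) + (\<Sum>i<q. c (p+i) *s w i)) = 0" using s2 by simp
    moreover have "(\<Sum>i<p. c i * bilin g (t l) (v i)) = 0" using t1 l by simp
    moreover have "(\<Sum>i<q. c (p+i) * bilin g (t l) (w i)) = (\<Sum>i<q. c (p+i) * (if l = i then 1 else 0))"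
      by (rule sum.cong) (auto simp: t2 l)
    ultimately show ?thesis by (simp add: bilin_lin sum_delta_nat l)
  qed
  then have "(\<Sum>i<q. c (p+i) *s w i) = 0" by simp
  then have "(\<Sum>i<p. c i *s v i) = 0" using s2 by simp
  then have "\<forall>i<p. c i = 0" using v unfolding indep_def by blast
  then show "c i = 0" using d i by (metis add_diff_inverse_nat add_less_cancel_left)
qed

locale spin =
  fixes m :: nat and g :: "complex^'i::finite^'i" and \<gamma> :: "'i \<Rightarrow> complex^'j::finite^'j"
  assumes dimV: "CARD('i) = 2 * m + 1"
    and dimS: "CARD('j) = 2 ^ m"
    and g_sym: "transpose g = g"
    and g_nondeg: "invertible g"
    and cliff: "clifford_rel g \<gamma>"
begin


lemma cliff2: "(\<Sum>C\<in>UNIV. \<gamma> a $ B $ C * \<gamma> b $ C $ A) + (\<Sum>C\<in>UNIV. \<gamma> b $ B $ C * \<gamma> a $ C $ A)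
   = -2 * g $ a $ b * (if B = A then 1 else 0)"
proof -
  have "((\<Sum>C\<in>UNIV. \<gamma> a $ B $ C * \<gamma> b $ C $ A) + (\<Sum>C\<in>UNIV. \<gamma> b $ B $ C * \<gamma> a $ C $ A)) / 2
     = - g $ a $ b * (if B = A then 1 else 0)"
    using cliff unfolding clifford_rel_def by blast
  then show ?thesis by (simp add: field_simps)
qed

lemma clifford: "act \<gamma> (act \<gamma> \<psi> X) Y + act \<gamma> (act \<gamma> \<psi> Y) X = (-2 * bilin g X Y) *s \<psi>"
proof (rule vec_eq_iff[THEN iffD2], rule allI)
  fix A
  let ?P = "\<lambda>a b B. (\<Sum>C\<in>UNIV. \<gamma> a $ B $ C * \<gamma> b $ C $ A)"
  have 1: "act \<gamma> (act \<gamma> \<psi> Y) X $ A = (\<Sum>a\<in>UNIV. \<Sum>b\<in>UNIV. \<Sum>B\<in>UNIV. X$a * Y$b * \<psi>$B * ?P b a B)"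
    unfolding act_act_comp by (subst sum.swap) (simp add: mult_ac)
  have "(act \<gamma> (act \<gamma> \<psi> X) Y + act \<gamma> (act \<gamma> \<psi> Y) X) $ A
      = (\<Sum>a\<in>UNIV. \<Sum>b\<in>UNIV. \<Sum>B\<in>UNIV. X$a * Y$b * \<psi>$B * (?P a b B + ?P b a B))"
    unfolding vector_add_component 1 unfolding act_act_comp by (simp add: sum.distrib distrib_left)
  also have "\<dots> = (\<Sum>a\<in>UNIV. \<Sum>b\<in>UNIV. \<Sum>B\<in>UNIV. X$a * Y$b * \<psi>$B * (-2 * g $ a $ b * (if B = A then 1 else 0)))"
    by (simp only: cliff2)
  also have "\<dots> = (\<Sum>a\<in>UNIV. \<Sum>b\<in>UNIV. X$a * Y$b * \<psi>$A * (-2 * g $ a $ b))"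
    by (simp add: if_distrib cong: if_cong)
  also have "\<dots> = ((-2 * bilin g X Y) *s \<psi>) $ A"
    by (simp add: bilin_def sum_distrib_left sum_distrib_right mult_ac)
  finally show "(act \<gamma> (act \<gamma> \<psi> X) Y + act \<gamma> (act \<gamma> \<psi> Y) X) $ A = ((-2 * bilin g X Y) *s \<psi>) $ A" .
qed

abbreviation "bl \<equiv> bilin g"
abbreviation "ac \<equiv> act \<gamma>"

lemma blsym: "bl X Y = bl Y X" using bilin_sym[OF g_sym] .

lemma cl_gen: "ac (ac \<psi> X) Y = (-2 * bl X Y) *s \<psi> - ac (ac \<psi> Y) X"
  using clifford[of \<psi> X Y] by (simp add: eq_diff_eq)

lemma cl_anti: "bl X Y = 0 \<Longrightarrow> ac (ac \<psi> X) Y = - ac (ac \<psi> Y) X"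
  using cl_gen[of \<psi> X Y] by simp

lemma cl_pair: "bl X Y = 1 \<Longrightarrow> ac (ac \<psi> X) Y = (-2) *s \<psi> - ac (ac \<psi> Y) X"
  using cl_gen[of \<psi> X Y] by simp

lemma cl_sq: "ac (ac \<psi> X) X = (- bl X X) *s \<psi>"
proof -
  have "ac (ac \<psi> X) X + ac (ac \<psi> X) X = (-2 * bl X X) *s \<psi>" using clifford[of \<psi> X X] .
  show ?thesis
  proof (rule vec_eq_iff[THEN iffD2], rule allI)
    fix A
    have "ac (ac \<psi> X) X $ A + ac (ac \<psi> X) X $ A = -2 * bl X X * \<psi> $ A"
      using \<open>ac (ac \<psi> X) X + ac (ac \<psi> X) X = (-2 * bl X X) *s \<psi>\<close>
      by (metis vector_add_component vector_smult_component)
    then have "2 * (ac (ac \<psi> X) X $ A) = -2 * bl X X * \<psi> $ A" by (simp only: mult_2)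
    then have "ac (ac \<psi> X) X $ A = (-2 * bl X X * \<psi> $ A) / 2" by (simp add: eq_divide_eq mult.commute)
    then show "ac (ac \<psi> X) X $ A = ((- bl X X) *s \<psi>) $ A" by simp
  qed
qed

lemma cl_null: "bl X X = 0 \<Longrightarrow> ac (ac \<psi> X) X = 0"
  using cl_sq by simp

lemma plane_null: "\<alpha> \<noteq> 0 \<Longrightarrow> ac \<alpha> X = 0 \<Longrightarrow> ac \<alpha> Y = 0 \<Longrightarrow> bl X Y = 0"
  using clifford[of \<alpha> X Y] by (simp add: vec.scale_eq_0_iff)

lemma sum_upd_lt: "(\<Sum>i<(p::nat). (c(p:=z)) i *s (v i :: 'a::field^'n)) = (\<Sum>i<p. c i *s v i)"
  by (rule sum.cong) auto

lemma solv:
  fixes v :: "nat \<Rightarrow> complex^'i" and p :: nat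
  assumes P: "vec.subspace P"
  shows "(\<forall>c. (\<forall>y\<in>P. bl (\<Sum>i<p. c i *s v i) y = 0) \<longrightarrow> (\<forall>i<p. c i = 0)) \<Longrightarrow>
         \<exists>x. (\<forall>j<p. x j \<in> P) \<and> (\<forall>i<p. \<forall>j<p. bl (v i) (x j) = (if i = j then 1 else 0))"
proof (induction p)
  case 0 show ?case by simp
next
  case (Suc p)
  have hp: "\<forall>c. (\<forall>y\<in>P. bl (\<Sum>i<p. c i *s v i) y = 0) \<longrightarrow> (\<forall>i<p. c i = 0)"
  proof (intro allI impI)
    fix c i assume h: "\<forall>y\<in>P. bl (\<Sum>i<p. c i *s v i) y = 0" and i: "i<p"
    have "(\<Sum>i<Suc p. (c(p:=0)) i *s v i) = (\<Sum>i<p. c i *s v i)" by (simp add: sum_upd_lt)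
    then have "\<forall>i<Suc p. (c(p:=0)) i = 0" using Suc.prems h by metis
    then show "c i = 0" using i by (metis fun_upd_apply less_Suc_eq nat_neq_iff)
  qed
  obtain x where x1: "\<forall>j<p. x j \<in> P" and x2: "\<forall>i<p. \<forall>j<p. bl (v i) (x j) = (if i = j then 1 else 0)"
    using Suc.IH[OF hp] by blast
  define \<phi> where "\<phi> y = bl (v p) y" for y
  have "\<exists>w\<in>P. (\<forall>i<p. bl (v i) w = 0) \<and> \<phi> w \<noteq> 0"
  proof (rule ccontr)
    assume H: "\<not> (\<exists>w\<in>P. (\<forall>i<p. bl (v i) w = 0) \<and> \<phi> w \<noteq> 0)"
    have eq: "\<phi> y = (\<Sum>i<p. bl (v i) y * \<phi> (x i))" if y: "y \<in> P" for y
    proof -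
      define w where "w = y - (\<Sum>i<p. bl (v i) y *s x i)"
      have wP: "w \<in> P" unfolding w_def using P y x1
        by (intro vec.subspace_diff vec.subspace_sum vec.subspace_scale) auto
      have "bl (v l) w = 0" if l: "l < p" for l
      proof -
        have "(\<Sum>i<p. bl (v i) y * bl (v l) (x i)) = (\<Sum>i<p. bl (v i) y * (if i = l then 1 else 0))"
          by (rule sum.cong) (auto simp: x2 l)
        then show ?thesis by (simp add: w_def bilin_lin sum_delta_nat' l)
      qed
      then have "\<phi> w = 0" using H wP by blast
      then show ?thesis by (simp add: w_def \<phi>_def bilin_lin mult.commute)
    qed
    define c where "c i = (if i < p then - \<phi> (x i) else 1)" for i
    have "\<forall>y\<in>P. bl (\<Sum>i<Suc p. c i *s v i) y = 0"
    proof
      fix y assume y: "y \<in> P"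
      have "bl (\<Sum>i<Suc p. c i *s v i) y = (\<Sum>i<p. c i * bl (v i) y) + \<phi> y"
        by (simp add: bilin_lin c_def \<phi>_def)
      also have "(\<Sum>i<p. c i * bl (v i) y) = - (\<Sum>i<p. bl (v i) y * \<phi> (x i))"
        by (simp add: c_def sum_negf[symmetric] mult.commute)
      finally show "bl (\<Sum>i<Suc p. c i *s v i) y = 0" using eq[OF y] by simp
    qed
    then have "c p = 0" using Suc.prems by blast
    then show False by (simp add: c_def)
  qed
  then obtain w where w1: "w \<in> P" and w2: "\<forall>i<p. bl (v i) w = 0" and w3: "\<phi> w \<noteq> 0" by blast
  define y0 where "y0 = (1 / \<phi> w) *s w"
  have y0P: "y0 \<in> P" unfolding y0_def using P w1 by (rule vec.subspace_scale)
  have y0a: "\<forall>i<p. bl (v i) y0 = 0" using w2 by (simp add: y0_def bilin_lin)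
  have y0b: "bl (v p) y0 = 1" using w3 by (simp add: y0_def bilin_lin \<phi>_def[symmetric])
  define x' where "x' j = (if j = p then y0 else x j - \<phi> (x j) *s y0)" for j
  have "\<forall>j<Suc p. x' j \<in> P"
    using x1 y0P P by (auto simp: x'_def less_Suc_eq intro!: vec.subspace_diff vec.subspace_scale)
  moreover have "\<forall>i<Suc p. \<forall>j<Suc p. bl (v i) (x' j) = (if i = j then 1 else 0)"
    using x2 y0a y0b by (auto simp: x'_def less_Suc_eq bilin_lin \<phi>_def)
  ultimately show ?case by blast
qed

lemma duals:
  assumes "indep v p"
  shows "\<exists>x. \<forall>i<p. \<forall>j<p. bl (v i) (x j) = (if i = j then 1 else 0)"
proof -
  have "\<forall>c. (\<forall>y\<in>UNIV. bl (\<Sum>i<p. c i *s v i) y = 0) \<longrightarrow> (\<forall>i<p. c i = 0)"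
    using bilin_nondeg[OF g_nondeg] assms unfolding indep_def by blast
  then show ?thesis using solv[OF vec.subspace_UNIV] by blast
qed

lemma null_bound:
  assumes "indep w p" "\<forall>i<p. \<forall>j<p. bl (w i) (w j) = 0"
  shows "p \<le> m"
proof -
  obtain x where x: "\<forall>i<p. \<forall>j<p. bl (w i) (x j) = (if i = j then 1 else 0)"
    using duals[OF assms(1)] by blast
  define z where "z i = (if i < p then w i else x (i - p))" for i
  have "indep z (p + p)"
    unfolding indep_def
  proof (intro allI impI)
    fix c i assume s: "(\<Sum>i<p+p. c i *s z i) = 0" and i: "i < p + p"
    have s2: "(\<Sum>i<p. c i *s w i) + (\<Sum>i<p. c (p+i) *s x i) = 0"
      using s unfolding sum_lessThan_add z_def by simp
    have d: "c (p + l) = 0" if l: "l < p" for l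
    proof -
      have "bl (w l) ((\<Sum>i<p. c i *s w i) + (\<Sum>i<p. c (p+i) *s x i)) = 0" using s2 by simp
      moreover have "(\<Sum>i<p. c i * bl (w l) (w i)) = 0" using assms(2) l by simp
      moreover have "(\<Sum>i<p. c (p+i) * bl (w l) (x i)) = (\<Sum>i<p. c (p+i) * (if l = i then 1 else 0))"
        by (rule sum.cong) (auto simp: x l)
      ultimately show ?thesis by (simp add: bilin_lin sum_delta_nat l)
    qed
    then have "(\<Sum>i<p. c (p+i) *s x i) = 0" by simp
    then have "(\<Sum>i<p. c i *s w i) = 0" using s2 by simp
    then have "\<forall>i<p. c i = 0" using assms(1) unfolding indep_def by blast
    then show "c i = 0" using d i by (metis add_diff_inverse_nat add_less_cancel_left)
  qed
  then have "p + p \<le> CARD('i)" by (rule indep_bound)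
  then show ?thesis using dimV by simp
qed


lemma ac_linear: "Vector_Spaces.linear (*s) (*s) (\<lambda>x. ac x w)"
  unfolding Vector_Spaces.linear_iff using vec.vector_space_axioms by (simp add: act_add1 act_scale1)

lemma halving:
  assumes W: "vec.subspace W"
    and inv1: "\<forall>x\<in>W. ac x v \<in> W" and inv2: "\<forall>x\<in>W. ac x w \<in> W"
    and vv: "bl v v = 0" and vw: "bl v w = 1"
  shows "vec.dim W = 2 * vec.dim {x\<in>W. ac x v = 0}"
proof -
  define K where "K = {x\<in>W. ac x v = 0}"
  define T where "T = (\<lambda>x. ac x w) ` K"
  have sK: "vec.subspace K"
    unfolding K_def vec.subspace_def using W
    by (auto simp: act_add1 act_scale1 intro: vec.subspace_0 vec.subspace_add vec.subspace_scale)
  have sT: "vec.subspace T"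
    unfolding T_def by (rule vec.linear_subspace_image[OF ac_linear sK])
  have key: "ac (ac x v) w = (-2) *s x - ac (ac x w) v" for x
    using cl_pair[OF vw] .
  have inj: "inj_on (\<lambda>x. ac x w) (vec.span K)"
  proof -
    have "vec.span K = K" using sK by simp
    moreover have "inj_on (\<lambda>x. ac x w) K"
    proof (rule inj_onI)
      fix x y assume x: "x \<in> K" and y: "y \<in> K" and e: "ac x w = ac y w"
      have zK: "x - y \<in> K" using sK x y by (rule vec.subspace_diff)
      have "ac (x - y) w = 0" using e by (simp add: act_diff1)
      moreover have "ac (x - y) v = 0" using zK by (simp add: K_def)
      ultimately have "(-2) *s (x - y) = 0" using key[of "x - y"] by simp
      then show "x = y" by (simp add: vec.scale_eq_0_iff)
    qed
    ultimately show ?thesis by (metis (no_types))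
  qed
  have dT: "vec.dim T = vec.dim K" unfolding T_def by (rule vec.dim_image_eq[OF ac_linear inj])
  have int: "K \<inter> T \<subseteq> {0}"
  proof
    fix y assume "y \<in> K \<inter> T"
    then obtain x where x: "x \<in> K" and y: "y = ac x w" "ac y v = 0" unfolding T_def K_def by auto
    have "ac (ac x v) w = 0" using x by (simp add: K_def)
    then have "(-2) *s x = 0" using key[of x] y by simp
    then have "x = 0" by (simp add: vec.scale_eq_0_iff)
    then show "y \<in> {0}" using y by simp
  qed
  have sum: "{x + y |x y. x \<in> K \<and> y \<in> T} = W"
  proof (intro set_eqI iffI)
    fix z assume "z \<in> {x + y |x y. x \<in> K \<and> y \<in> T}"
    then obtain x y where "z = x + y" "x \<in> K" "y \<in> T" by blast
    moreover have "T \<subseteq> W" using inv2 by (auto simp: T_def K_def)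
    ultimately show "z \<in> W" using W by (auto simp: K_def intro: vec.subspace_add)
  next
    fix z assume z: "z \<in> W"
    define x where "x = (- 1/2) *s ac (ac z w) v"
    define y where "y = ac ((- 1/2) *s ac z v) w"
    have "x \<in> K" unfolding x_def K_def using z inv1 inv2 W
      by (simp add: act_scale1 act_neg1 cl_null[OF vv] vec.subspace_scale vec.subspace_neg)
    moreover have "(- 1/2) *s ac z v \<in> K" unfolding K_def using z inv1 W
      by (simp add: act_scale1 act_neg1 cl_null[OF vv] vec.subspace_scale vec.subspace_neg)
    then have "y \<in> T" unfolding y_def T_def by blast
    moreover have "z = x + y"
      unfolding x_def y_def act_scale1 using key[of z]
      by (simp add: vec_eq_iff field_simps) (metis add.commute add.left_commute eq_neg_iff_add_eq_0)
    ultimately show "z \<in> {x + y |x y. x \<in> K \<and> y \<in> T}" by blast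
  qed
  have e1: "vec.dim W + vec.dim (K \<inter> T) = vec.dim K + vec.dim T"
    using vec.dim_sums_Int[OF sK sT] unfolding sum .
  have e2: "vec.dim (K \<inter> T) = 0" using int vec.dim_eq_0 by blast
  show ?thesis unfolding K_def[symmetric] using e1 e2 dT by linarith
qed

lemma kernel_dim:
  fixes v w :: "nat \<Rightarrow> complex^'i"
  assumes vv: "\<forall>i<m. \<forall>j<m. bl (v i) (v j) = 0"
    and vw: "\<forall>i<m. \<forall>j<m. bl (v i) (w j) = (if i = j then 1 else 0)"
  shows "j \<le> m \<Longrightarrow> 2 ^ j * vec.dim {x. \<forall>i<j. ac x (v i) = 0} = 2 ^ m"
proof (induction j)
  case 0
  then show ?case using dimS vec_dim_card[where 'a=complex and 'n='j] by simp
next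
  case (Suc j)
  let ?K = "\<lambda>j. {x. \<forall>i<j. ac x (v i) = 0}"
  have sK: "vec.subspace (?K j)"
    unfolding vec.subspace_def by (simp add: act_add1 act_scale1)
  have jm: "j < m" using Suc.prems by simp
  have inv1: "\<forall>x\<in>?K j. ac x (v j) \<in> ?K j"
    using vv jm by (auto simp: cl_anti)
  have inv2: "\<forall>x\<in>?K j. ac x (w j) \<in> ?K j"
  proof (intro ballI, simp, intro allI impI)
    fix x i assume x: "\<forall>i<j. ac x (v i) = 0" and i: "i < j"
    have "bl (w j) (v i) = 0" using vw jm i blsym by (metis less_trans nat_neq_iff)
    then show "ac (ac x (w j)) (v i) = 0" using cl_anti x i by simp
  qed
  have h: "vec.dim (?K j) = 2 * vec.dim {x\<in>?K j. ac x (v j) = 0}"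
    by (rule halving[OF sK inv1 inv2]) (use vv vw jm in auto)
  have "{x\<in>?K j. ac x (v j) = 0} = ?K (Suc j)" by (auto simp: less_Suc_eq)
  then show ?case using Suc.IH Suc.prems h by simp
qed

lemma uniq:
  fixes v w :: "nat \<Rightarrow> complex^'i"
  assumes vv: "\<forall>i<m. \<forall>j<m. bl (v i) (v j) = 0"
    and vw: "\<forall>i<m. \<forall>j<m. bl (v i) (w j) = (if i = j then 1 else 0)"
    and phi: "\<phi> \<noteq> 0" "\<forall>i<m. ac \<phi> (v i) = 0" and psi: "\<forall>i<m. ac \<psi> (v i) = 0"
  shows "\<exists>c. \<psi> = c *s \<phi>"
proof -
  let ?K = "{x. \<forall>i<m. ac x (v i) = 0}"
  have d: "vec.dim ?K = 1" using kernel_dim[OF vv vw, of m] by simp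
  have sK: "vec.subspace ?K"
    unfolding vec.subspace_def by (simp add: act_add1 act_scale1)
  obtain b where b: "\<forall>x\<in>?K. \<exists>c. x = (\<Sum>i<vec.dim ?K. c i *s b i)"
    using subspace_basis[OF sK] by blast
  obtain a where a: "\<phi> = a *s b 0" using b phi d by fastforce
  obtain c where c: "\<psi> = c *s b 0" using b psi d by fastforce
  have "a \<noteq> 0" using a phi by auto
  then have "\<psi> = (c / a) *s \<phi>" using a c by (simp add: vector_smult_assoc)
  then show ?thesis by blast
qed


lemma basis_change:
  fixes f fs :: "nat \<Rightarrow> complex^'i"
  assumes dual: "\<forall>k<CARD('i). \<forall>l<CARD('i). bl (f k) (fs l) = (if k = l then 1 else 0)"
  shows "(\<Sum>a\<in>UNIV. \<Sum>b\<in>UNIV. matrix_inv g $ a $ b * X $ a * Y $ b)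
         = (\<Sum>k<CARD('i). dotc (f k) X * dotc (fs k) Y)"
proof -
  have gi: "g ** matrix_inv g = mat 1" using matrix_inv_props[OF g_nondeg] by blast
  define Z where "Z = matrix_inv g *v X"
  have XZ: "X = g *v Z" unfolding Z_def using gi by (simp add: matrix_vector_mul_assoc)
  obtain c where c: "Z = (\<Sum>l<CARD('i). c l *s fs l)"
    using indep_span_all[OF dual_indep[OF dual]] by blast
  have fk: "dotc (f k) X = c k" if k: "k < CARD('i)" for k
  proof -
    have "dotc (f k) X = bl (f k) Z" by (simp add: XZ bilin_dot)
    also have "\<dots> = (\<Sum>l<CARD('i). c l * (if k = l then 1 else 0))"
      unfolding c by (simp add: bilin_sum2 bilin_scale2) (rule sum.cong, auto simp: dual k)
    also have "\<dots> = c k" using k by (simp add: sum_delta_nat)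
    finally show ?thesis .
  qed
  have "(\<Sum>k<CARD('i). dotc (f k) X * dotc (fs k) Y) = (\<Sum>k<CARD('i). c k * dotc (fs k) Y)"
    by (rule sum.cong) (auto simp: fk)
  also have "\<dots> = dotc Z Y" unfolding c by (simp add: dotc_sum1 dotc_scale1)
  finally have R: "(\<Sum>k<CARD('i). dotc (f k) X * dotc (fs k) Y) = dotc Z Y" .
  have "(\<Sum>a\<in>UNIV. \<Sum>b\<in>UNIV. matrix_inv g $ a $ b * X $ a * Y $ b) = dotc X (matrix_inv g *v Y)"
    by (simp add: dotc_def matrix_vector_mult_def sum_distrib_left mult_ac)
  also have "\<dots> = dotc Z (transpose g *v (matrix_inv g *v Y))" unfolding XZ by (rule dotc_mv)
  also have "\<dots> = dotc Z Y" using gi g_sym by (simp add: matrix_vector_mul_assoc)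
  finally show ?thesis using R by simp
qed

lemma contr_basis:
  fixes f fs :: "nat \<Rightarrow> complex^'i"
  assumes dual: "\<forall>k<CARD('i). \<forall>l<CARD('i). bl (f k) (fs l) = (if k = l then 1 else 0)"
  shows "contr g \<gamma> \<alpha> \<beta> $ A $ B = (\<Sum>k<CARD('i). ac \<alpha> (f k) $ A * ac \<beta> (fs k) $ B)"
proof -
  define X where "X = (\<chi> a. spin_act \<gamma> \<alpha> a $ A)"
  define Y where "Y = (\<chi> b. spin_act \<gamma> \<beta> b $ B)"
  have "contr g \<gamma> \<alpha> \<beta> $ A $ B = (\<Sum>a\<in>UNIV. \<Sum>b\<in>UNIV. matrix_inv g $ a $ b * X $ a * Y $ b)"
    by (simp add: contr_def X_def Y_def)
  also have "\<dots> = (\<Sum>k<CARD('i). dotc (f k) X * dotc (fs k) Y)" by (rule basis_change[OF dual])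
  also have "\<dots> = (\<Sum>k<CARD('i). ac \<alpha> (f k) $ A * ac \<beta> (fs k) $ B)"
    by (simp add: act_eq dotc_def X_def Y_def)
  finally show ?thesis .
qed


lemma perp_zero:
  assumes H: "indep H (CARD('i))" and X: "\<forall>k<CARD('i). bl X (H k) = 0"
  shows "X = 0"
proof (rule bilin_nondeg[OF g_nondeg], rule allI)
  fix Y
  obtain c where "Y = (\<Sum>k<CARD('i). c k *s H k)" using indep_span_all[OF H] by blast
  then show "bl X Y = 0" using X by (simp add: bilin_sum2 bilin_scale2)
qed

lemma maxnull:
  assumes W: "vec.subspace W" and dW: "vec.dim W = m" and nW: "\<forall>X\<in>W. \<forall>Y\<in>W. bl X Y = 0"
    and aa: "bl a a = 0" and aW: "\<forall>Y\<in>W. bl a Y = 0"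
  shows "a \<in> W"
proof (rule ccontr)
  assume na: "a \<notin> W"
  obtain b where b1: "indep b m" and b2: "\<forall>i<m. b i \<in> W"
    using subspace_basis[OF W] dW by blast
  have "indep (b(m:=a)) (Suc m)"
    unfolding indep_def
  proof (intro allI impI)
    fix c i assume s: "(\<Sum>i<Suc m. c i *s (b(m:=a)) i) = 0" and i: "i < Suc m"
    have s2: "(\<Sum>i<m. c i *s b i) + c m *s a = 0"
      using s by (simp add: sum_upd_lt[where p=m] add.commute)
    have cm: "c m = 0"
    proof (rule ccontr)
      assume cm: "c m \<noteq> 0"
      have "a = (- inverse (c m)) *s (\<Sum>i<m. c i *s b i)"
        using s2 cm by (simp add: vec_eq_iff field_simps add_eq_0_iff)
      also have "\<dots> \<in> W" using W b2
        by (intro vec.subspace_scale vec.subspace_sum) auto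
      finally show False using na by simp
    qed
    then have "(\<Sum>i<m. c i *s b i) = 0" using s2 by simp
    then show "c i = 0" using b1 i cm unfolding indep_def by (metis less_Suc_eq)
  qed
  moreover have "\<forall>i<Suc m. \<forall>j<Suc m. bl ((b(m:=a)) i) ((b(m:=a)) j) = 0"
    using nW b2 aa aW blsym by (auto simp: less_Suc_eq)
  ultimately have "Suc m \<le> m" by (rule null_bound)
  then show False by simp
qed


lemma witt_u:
  fixes n n' :: "nat \<Rightarrow> complex^'i"
  assumes n_ind: "indep n m"
    and nn: "\<forall>i<m. \<forall>j<m. bl (n i) (n j) = 0"
    and nn': "\<forall>i<m. \<forall>j<m. bl (n i) (n' j) = (if i = j then 1 else 0)"
    and n'n': "\<forall>i<m. \<forall>j<m. bl (n' i) (n' j) = 0"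
  shows "\<exists>u. (\<forall>i<m. bl u (n i) = 0) \<and> (\<forall>i<m. bl u (n' i) = 0) \<and> bl u u = 1"
proof -
  define G where "G = cat m n n'"
  have G_ind: "indep G (m + m)" unfolding G_def
    by (rule cat_indep[OF n_ind, where t=n]) (use nn nn' in auto)
  have n'n: "\<forall>i<m. \<forall>j<m. bl (n' i) (n j) = (if i = j then 1 else 0)"
  proof (intro allI impI)
    fix i j assume "i < m" "j < m"
    then show "bl (n' i) (n j) = (if i = j then 1 else 0)" by (subst blsym) (auto simp: nn')
  qed
  have "m + m < vec.dim (UNIV :: (complex^'i) set)" using dimV vec_dim_card[where 'a=complex and 'n='i] by simp
  then obtain z where zH: "indep (G(m+m := z)) (Suc (m+m))"
    using indep_extend[OF G_ind, of UNIV] by auto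
  define H where "H = G(m+m := z)"
  have cardi: "CARD('i) = Suc (m + m)" using dimV by simp
  define u0 where "u0 = z - (\<Sum>i<m. bl z (n' i) *s n i) - (\<Sum>i<m. bl z (n i) *s n' i)"
  have u0n: "bl u0 (n j) = 0" if j: "j < m" for j
  proof -
    have "(\<Sum>i<m. bl z (n' i) * bl (n i) (n j)) = 0" using nn j by simp
    moreover have "(\<Sum>i<m. bl z (n i) * bl (n' i) (n j)) = (\<Sum>i<m. bl z (n i) * (if i = j then 1 else 0))"
      by (rule sum.cong) (use n'n j in auto)
    ultimately show ?thesis using j by (simp add: u0_def bilin_lin sum_delta_nat')
  qed
  have u0n': "bl u0 (n' j) = 0" if j: "j < m" for j
  proof -
    have "(\<Sum>i<m. bl z (n i) * bl (n' i) (n' j)) = 0" using n'n' j by simp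
    moreover have "(\<Sum>i<m. bl z (n' i) * bl (n i) (n' j)) = (\<Sum>i<m. bl z (n' i) * (if i = j then 1 else 0))"
      by (rule sum.cong) (use nn' j in auto)
    ultimately show ?thesis using j by (simp add: u0_def bilin_lin sum_delta_nat')
  qed
  have u0nz: "u0 \<noteq> 0"
  proof
    assume u0: "u0 = 0"
    define cc where "cc i = (if i < m then - bl z (n' i) else if i < m + m then - bl z (n (i - m)) else 1)" for i
    have "(\<Sum>i<Suc (m+m). cc i *s H i) = (\<Sum>i<m+m. cc i *s G i) + z"
      by (simp add: H_def cc_def sum_upd_lt[where p="m+m"])
    also have "(\<Sum>i<m+m. cc i *s G i) = - (\<Sum>i<m. bl z (n' i) *s n i) - (\<Sum>i<m. bl z (n i) *s n' i)"
      unfolding G_def sum_cat by (simp add: cc_def sum_negf)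
    finally have "(\<Sum>i<Suc (m+m). cc i *s H i) = u0" by (simp add: u0_def)
    then have "cc (m+m) = 0" using zH u0 unfolding H_def indep_def by blast
    then show False by (simp add: cc_def)
  qed
  have q: "bl u0 u0 \<noteq> 0"
  proof
    assume q0: "bl u0 u0 = 0"
    have "\<forall>k<CARD('i). bl u0 (H k) = 0"
    proof (intro allI impI)
      fix k assume k: "k < CARD('i)"
      show "bl u0 (H k) = 0"
      proof (cases "k = m + m")
        case True
        have "bl u0 u0 = bl u0 z - (\<Sum>i<m. bl z (n' i) * bl u0 (n i)) - (\<Sum>i<m. bl z (n i) * bl u0 (n' i))"
          by (subst (2) u0_def) (simp add: bilin_lin)
        then have "bl u0 z = bl u0 u0" using u0n u0n' by simp
        then show ?thesis using True q0 u0n u0n' by (simp add: H_def)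
      next
        case False
        then have "k < m + m" using k cardi by simp
        then show ?thesis using False u0n u0n' by (auto simp: H_def G_def cat_def)
      qed
    qed
    then have "u0 = 0" using perp_zero zH cardi unfolding H_def by simp
    then show False using u0nz by simp
  qed
  define u where "u = (1 / csqrt (bl u0 u0)) *s u0"
  have sq: "csqrt (bl u0 u0) \<noteq> 0" using q by simp
  have "bl u u = bl u0 u0 / (csqrt (bl u0 u0))^2"
    by (simp add: u_def bilin_lin power2_eq_square)
  also have "\<dots> = 1" using q by (simp add: power2_csqrt)
  finally have "bl u u = 1" .
  moreover have "\<forall>i<m. bl u (n i) = 0" using u0n by (simp add: u_def bilin_lin)
  moreover have "\<forall>i<m. bl u (n' i) = 0" using u0n' by (simp add: u_def bilin_lin)
  ultimately show ?thesis by blast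
qed


lemma witt:
  assumes sA: "vec.subspace A" and sB: "vec.subspace Bp" and dA: "vec.dim A = m" and dB: "vec.dim Bp = m"
    and nA: "\<forall>X\<in>A. \<forall>Y\<in>A. bl X Y = 0" and nB: "\<forall>X\<in>Bp. \<forall>Y\<in>Bp. bl X Y = 0"
    and r: "r = vec.dim (A \<inter> Bp)"
  shows "\<exists>n n' u. (\<forall>i<m. n i \<in> A) \<and> (\<forall>i<r. n i \<in> Bp) \<and> (\<forall>j<m. r \<le> j \<longrightarrow> n' j \<in> Bp)
     \<and> (\<forall>i<m. \<forall>j<m. bl (n i) (n j) = 0) \<and> (\<forall>i<m. \<forall>j<m. bl (n' i) (n' j) = 0)
     \<and> (\<forall>i<m. \<forall>j<m. bl (n i) (n' j) = (if i = j then 1 else 0))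
     \<and> (\<forall>i<m. bl u (n i) = 0) \<and> (\<forall>i<m. bl u (n' i) = 0) \<and> bl u u = 1 \<and> r \<le> m"
proof -
  let ?I = "A \<inter> Bp"
  have sI: "vec.subspace ?I" using sA sB by (rule vec.subspace_inter)
  have rm: "r \<le> m" using vec.dim_subset[of ?I A] dA r by auto
  obtain e where e1: "indep e r" and e2: "\<forall>i<r. e i \<in> ?I" and e3: "\<forall>X\<in>?I. \<exists>d. X = (\<Sum>i<r. d i *s e i)"
    using subspace_basis[OF sI] r by blast
  obtain n where n1: "indep n m" and n2: "\<forall>i<r. n i = e i" and n3: "\<forall>i<m. n i \<in> A"
    using extend_to[OF e1, of A m] e2 rm dA by auto
  have nB': "\<forall>i<r. n i \<in> Bp" using n2 e2 by auto
  have nn: "\<forall>i<m. \<forall>j<m. bl (n i) (n j) = 0" using nA n3 by blast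
  define k where "k = m - r"
  have mrk: "m = r + k" using rm by (simp add: k_def)
  have hypB: "\<forall>c. (\<forall>y\<in>Bp. bl (\<Sum>j<k. c j *s n (r + j)) y = 0) \<longrightarrow> (\<forall>i<k. c i = 0)"
  proof (intro allI impI)
    fix c i assume h: "\<forall>y\<in>Bp. bl (\<Sum>j<k. c j *s n (r + j)) y = 0" and i: "i < k"
    define a where "a = (\<Sum>j<k. c j *s n (r + j))"
    have aA: "a \<in> A" unfolding a_def using sA n3 mrk
      by (intro vec.subspace_sum vec.subspace_scale) auto
    have "a \<in> Bp"
      by (rule maxnull[OF sB dB nB]) (use nA aA h a_def in auto)
    then obtain d where d: "a = (\<Sum>i<r. d i *s e i)" using e3 aA by blast
    define cc where "cc i = (if i < r then d i else - c (i - r))" for i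
    have "(\<Sum>i<r+k. cc i *s n i) = (\<Sum>i<r. d i *s n i) - a"
      unfolding sum_lessThan_add a_def by (simp add: cc_def sum_negf)
    also have "(\<Sum>i<r. d i *s n i) = a" unfolding d using n2 by simp
    finally have "(\<Sum>i<r+k. cc i *s n i) = 0" by simp
    then have "cc (r + i) = 0" using n1 i mrk unfolding indep_def by auto
    then show "c i = 0" by (simp add: cc_def)
  qed
  obtain xB where xB1: "\<forall>j<k. xB j \<in> Bp" and xB2: "\<forall>i<k. \<forall>j<k. bl (n (r+i)) (xB j) = (if i = j then 1 else 0)"
    using solv[OF sB hypB] by blast
  define F where "F = cat m n xB"
  have F_ind: "indep F (m + k)" unfolding F_def
    by (rule cat_indep[OF n1, where t="\<lambda>l. n (r + l)"]) (use nn xB2 mrk in auto)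
  obtain x where x: "\<forall>i<m+k. \<forall>j<m+k. bl (F i) (x j) = (if i = j then 1 else 0)"
    using duals[OF F_ind] by blast
  have xn: "bl (n i) (x j) = (if i = j then 1 else 0)" if "i < m" "j < r" for i j
    using x[rule_format, of i j] that rm by (simp add: F_def cat_def)
  have xxB: "bl (xB l) (x j) = 0" if "l < k" "j < r" for l j
    using x[rule_format, of "m + l" j] that rm by (simp add: F_def cat_def)
  define S where "S j = (\<Sum>l<r. bl (x j) (x l) *s n l)" for j
  define n' where "n' j = (if j < r then x j - (1/2) *s S j else xB (j - r))" for j
  have Sb: "bl (S j) Y = (\<Sum>l<r. bl (x j) (x l) * bl (n l) Y)" for j Y
    by (simp add: S_def bilin_lin)
  have bS: "bl Y (S j) = (\<Sum>l<r. bl (x j) (x l) * bl Y (n l))" for j Y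
    by (simp add: S_def bilin_lin)
  have nS: "bl (n i) (S j) = 0" if "i < m" for i j
    using nn that rm by (simp add: bS)
  have nn': "\<forall>i<m. \<forall>j<m. bl (n i) (n' j) = (if i = j then 1 else 0)"
  proof (intro allI impI)
    fix i j assume i: "i < m" and j: "j < m"
    show "bl (n i) (n' j) = (if i = j then 1 else 0)"
    proof (cases "j < r")
      case True
      then show ?thesis using i xn nS by (simp add: n'_def bilin_lin)
    next
      case False
      show ?thesis
      proof (cases "i < r")
        case True
        then have "bl (n i) (xB (j - r)) = 0" using nB nB' xB1 False j mrk by auto
        then show ?thesis using True False by (simp add: n'_def)
      next
        case False2: False
        have e: "r + (i - r) = i" using False2 by simp
        have "bl (n i) (xB (j - r)) = (if i - r = j - r then 1 else 0)"
          using xB2[rule_format, of "i - r" "j - r"] e i j False False2 mrk by simp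
        moreover have "(i - r = j - r) = (i = j)" using False False2 by auto
        ultimately show ?thesis using False False2 by (simp add: n'_def)
      qed
    qed
  qed
  have xS: "bl (x i) (S j) = bl (x j) (x i)" if "i < r" "j < r" for i j
  proof -
    have "(\<Sum>l<r. bl (x j) (x l) * bl (x i) (n l)) = (\<Sum>l<r. bl (x j) (x l) * (if l = i then 1 else 0))"
      by (rule sum.cong) (use that rm xn blsym in auto)
    then show ?thesis using that by (simp add: bS sum_delta_nat')
  qed
  have Sx: "bl (S i) (x j) = bl (x i) (x j)" if "i < r" "j < r" for i j
  proof -
    have "(\<Sum>l<r. bl (x i) (x l) * bl (n l) (x j)) = (\<Sum>l<r. bl (x i) (x l) * (if l = j then 1 else 0))"
      by (rule sum.cong) (use that rm xn in auto)
    then show ?thesis using that by (simp add: Sb sum_delta_nat')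
  qed
  have SS: "bl (S i) (S j) = 0" for i j
    using nS rm by (simp add: Sb)
  have xBS: "bl (xB l) (S j) = 0" if "l < k" for l j
  proof -
    have "\<forall>i<r. bl (xB l) (n i) = 0" using nB nB' xB1 that by auto
    then show ?thesis by (simp add: bS)
  qed
  have n'n': "\<forall>i<m. \<forall>j<m. bl (n' i) (n' j) = 0"
  proof (intro allI impI)
    fix i j assume i: "i < m" and j: "j < m"
    show "bl (n' i) (n' j) = 0"
    proof (cases "i < r")
      case ir: True
      show ?thesis
      proof (cases "j < r")
        case jr: True
        have "bl (n' i) (n' j) = bl (x i) (x j) - (1/2) * bl (x i) (S j) - (1/2) * bl (S i) (x j) + (1/4) * bl (S i) (S j)"
          using ir jr by (simp add: n'_def bilin_lin algebra_simps)
        also have "\<dots> = 0" using ir jr by (simp add: xS Sx SS blsym[of "x j" "x i"])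
        finally show ?thesis .
      next
        case jr: False
        have "bl (xB (j - r)) (n' i) = 0"
          using ir xxB[of "j - r" i] xBS[of "j - r" i] jr j mrk by (simp add: n'_def bilin_lin)
        then show ?thesis using ir jr by (simp add: n'_def blsym)
      qed
    next
      case ir: False
      show ?thesis
      proof (cases "j < r")
        case jr: True
        show ?thesis
          using jr xxB[of "i - r" j] xBS[of "i - r" j] ir i mrk by (simp add: n'_def bilin_lin)
      next
        case jr: False
        then show ?thesis using ir nB xB1 i j mrk by (simp add: n'_def)
      qed
    qed
  qed
  have n'B: "\<forall>j<m. r \<le> j \<longrightarrow> n' j \<in> Bp" using xB1 mrk by (auto simp: n'_def)
  obtain u where u: "(\<forall>i<m. bl u (n i) = 0) \<and> (\<forall>i<m. bl u (n' i) = 0) \<and> bl u u = 1"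
    using witt_u[OF n1 nn nn' n'n'] by blast
  show ?thesis using n3 nB' n'B nn n'n' nn' u rm by blast
qed


lemma slot1:
  assumes "finite L" "\<forall>A B. (\<Sum>l\<in>L. x l $ A * y l $ B) = 0"
  shows "\<forall>A B. (\<Sum>l\<in>L. ac (x l) X $ A * y l $ B) = 0"
proof (intro allI)
  fix A B
  have "(\<Sum>l\<in>L. y l $ B *s x l) = 0"
    using assms(2) by (simp add: vec_eq_iff mult.commute)
  then have "ac (\<Sum>l\<in>L. y l $ B *s x l) X = 0" by simp
  then have "(\<Sum>l\<in>L. y l $ B *s ac (x l) X) = 0" by (simp add: act_sum1 act_scale1)
  then show "(\<Sum>l\<in>L. ac (x l) X $ A * y l $ B) = 0"
    by (simp add: vec_eq_iff mult.commute)
qed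

lemma slot2:
  assumes "finite L" "\<forall>A B. (\<Sum>l\<in>L. x l $ A * y l $ B) = 0"
  shows "\<forall>A B. (\<Sum>l\<in>L. x l $ A * ac (y l) X $ B) = 0"
proof -
  have "\<forall>A B. (\<Sum>l\<in>L. y l $ A * x l $ B) = 0" using assms(2) by (simp add: mult.commute)
  then have "\<forall>A B. (\<Sum>l\<in>L. ac (y l) X $ A * x l $ B) = 0" by (rule slot1[OF assms(1)])
  then show ?thesis by (simp add: mult.commute)
qed

lemma rank1_sym:
  fixes \<alpha> w :: "complex^'j"
  assumes "\<alpha> \<noteq> 0" "\<forall>A B. \<alpha> $ A * w $ B = w $ A * \<alpha> $ B"
  shows "\<exists>c. w = c *s \<alpha>"
proof -
  obtain A0 where A0: "\<alpha> $ A0 \<noteq> 0" using assms(1) by (auto simp: vec_eq_iff)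
  have "w = (w $ A0 / \<alpha> $ A0) *s \<alpha>"
  proof (rule vec_eq_iff[THEN iffD2], rule allI)
    fix B
    have "\<alpha> $ A0 * w $ B = w $ A0 * \<alpha> $ B" using assms(2) by blast
    then show "w $ B = ((w $ A0 / \<alpha> $ A0) *s \<alpha>) $ B" using A0 by (simp add: field_simps)
  qed
  then show ?thesis by blast
qed


lemma main:
  assumes pure_a: "pure_spinor \<gamma> m \<alpha>" and pure_b: "pure_spinor \<gamma> m \<beta>"
    and nonprop: "\<not> (\<exists>c. \<beta> = c *s \<alpha>)"
  shows "((totally_null g (gamma_plane \<gamma> \<alpha> \<inter> gamma_plane \<gamma> \<beta>) \<and>
            vec.dim (gamma_plane \<gamma> \<alpha> \<inter> gamma_plane \<gamma> \<beta>) = m - 1)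
          \<longleftrightarrow> (\<forall>A B. contr g \<gamma> \<alpha> \<beta> $ A $ B = \<alpha> $ A * \<beta> $ B - 2 * \<beta> $ A * \<alpha> $ B
                   \<and> \<alpha> $ A * \<beta> $ B - 2 * \<beta> $ A * \<alpha> $ B
                     = - ((\<alpha> $ A * \<beta> $ B + \<alpha> $ B * \<beta> $ A) / 2)
                       + 3 * ((\<alpha> $ A * \<beta> $ B - \<alpha> $ B * \<beta> $ A) / 2)))
       \<and> ((\<exists>k\<in>{1, 2}. k \<le> m \<and> totally_null g (gamma_plane \<gamma> \<alpha> \<inter> gamma_plane \<gamma> \<beta>) \<and>
            vec.dim (gamma_plane \<gamma> \<alpha> \<inter> gamma_plane \<gamma> \<beta>) = m - k)
          \<longleftrightarrow> (\<forall>A B. (contr g \<gamma> \<alpha> \<beta> $ A $ B + contr g \<gamma> \<alpha> \<beta> $ B $ A) / 2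
                     = - ((\<alpha> $ A * \<beta> $ B + \<alpha> $ B * \<beta> $ A) / 2)))"
proof -
  define PA where "PA = gamma_plane \<gamma> \<alpha>"
  define PB where "PB = gamma_plane \<gamma> \<beta>"
  have a0: "\<alpha> \<noteq> 0" and dA: "vec.dim PA = m" using pure_a by (auto simp: pure_spinor_def PA_def)
  have b0: "\<beta> \<noteq> 0" and dB: "vec.dim PB = m" using pure_b by (auto simp: pure_spinor_def PB_def)
  have PAe: "PA = {X. ac \<alpha> X = 0}" by (simp add: PA_def gamma_plane_act)
  have PBe: "PB = {X. ac \<beta> X = 0}" by (simp add: PB_def gamma_plane_act)
  have sA: "vec.subspace PA" unfolding PAe vec.subspace_def by (simp add: act_add2 act_scale2)
  have sB: "vec.subspace PB" unfolding PBe vec.subspace_def by (simp add: act_add2 act_scale2)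
  have nA: "\<forall>X\<in>PA. \<forall>Y\<in>PA. bl X Y = 0" using plane_null[OF a0] PAe by auto
  have nB: "\<forall>X\<in>PB. \<forall>Y\<in>PB. bl X Y = 0" using plane_null[OF b0] PBe by auto
  have tn: "totally_null g (PA \<inter> PB)" unfolding totally_null_def using nA by blast
  define r where "r = vec.dim (PA \<inter> PB)"
  obtain n n' u where
        w1: "\<forall>i<m. n i \<in> PA" and w2: "\<forall>i<r. n i \<in> PB" and w3: "\<forall>j<m. r \<le> j \<longrightarrow> n' j \<in> PB"
    and nn: "\<forall>i<m. \<forall>j<m. bl (n i) (n j) = 0" and n'n': "\<forall>i<m. \<forall>j<m. bl (n' i) (n' j) = 0"
    and nn': "\<forall>i<m. \<forall>j<m. bl (n i) (n' j) = (if i = j then 1 else 0)"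
    and un: "\<forall>i<m. bl u (n i) = 0" and un': "\<forall>i<m. bl u (n' i) = 0" and uu: "bl u u = 1"
    and rm: "r \<le> m"
    using witt[OF sA sB dA dB nA nB r_def] by (elim exE conjE) (rule that; assumption)
  have n'n: "bl (n' i) (n j) = (if i = j then 1 else 0)" if "i < m" "j < m" for i j
    using nn' that by (subst blsym) auto
  have nu: "bl (n i) u = 0" if "i < m" for i using un that by (subst blsym) auto
  have n'u: "bl (n' i) u = 0" if "i < m" for i using un' that by (subst blsym) auto
  have an: "ac \<alpha> (n i) = 0" if "i < m" for i using w1 that PAe by auto
  have bn: "ac \<beta> (n i) = 0" if "i < r" for i using w2 that PBe by auto
  have bn': "ac \<beta> (n' j) = 0" if "j < m" "r \<le> j" for j using w3 that PBe by auto
  have card: "CARD('i) = m + m + 1" using dimV by simp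
  define f where "f = cat (m+m) (cat m n n') (\<lambda>_. u)"
  define fs where "fs = cat (m+m) (cat m n' n) (\<lambda>_. u)"
  have dual: "\<forall>k<CARD('i). \<forall>l<CARD('i). bl (f k) (fs l) = (if k = l then 1 else 0)"
  proof (intro allI impI)
    fix k l assume k: "k < CARD('i)" and l: "l < CARD('i)"
    have fk: "f k = (if k < m then n k else if k < m+m then n' (k-m) else u)"
      by (simp add: f_def cat_def)
    have fsl: "fs l = (if l < m then n' l else if l < m+m then n (l-m) else u)"
      by (simp add: fs_def cat_def)
    have dm: "\<And>k l. \<not> k < m \<Longrightarrow> \<not> l < m \<Longrightarrow> (k - m = l - m) = (k = l)" by auto
    note R = nn[rule_format] n'n'[rule_format] nn'[rule_format] n'n nu n'u un[rule_format] un'[rule_format] uu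
    show "bl (f k) (fs l) = (if k = l then 1 else 0)"
      unfolding fk fsl using k l card
      by (cases "k < m"; cases "l < m"; cases "k < m+m"; cases "l < m+m") (simp_all add: R dm)
  qed
  define a where "a i = ac \<alpha> (n' i)" for i
  define b where "b i = ac \<beta> (n i)" for i
  define au where "au = ac \<alpha> u"
  define bu where "bu = ac \<beta> u"
  have contr_eq: "contr g \<gamma> \<alpha> \<beta> $ A $ B = (\<Sum>i<m. a i $ A * b i $ B) + au $ A * bu $ B" for A B
  proof -
    have "contr g \<gamma> \<alpha> \<beta> $ A $ B = (\<Sum>k<m+m+1. ac \<alpha> (f k) $ A * ac \<beta> (fs k) $ B)"
      using contr_basis[OF dual] card by simp
    also have "\<dots> = (\<Sum>k<m. ac \<alpha> (n k) $ A * ac \<beta> (n' k) $ B) + (\<Sum>i<m. a i $ A * b i $ B) + au $ A * bu $ B"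
      unfolding sum_lessThan_add by (simp add: f_def fs_def cat_def a_def b_def au_def bu_def)
    also have "(\<Sum>k<m. ac \<alpha> (n k) $ A * ac \<beta> (n' k) $ B) = 0" using an by simp
    finally show ?thesis by simp
  qed

  have uA: "\<exists>c. \<psi> = c *s \<alpha>" if "\<forall>i<m. ac \<psi> (n i) = 0" for \<psi>
    using uniq[OF nn nn' a0] an that by blast
  define nb where "nb i = (if i < r then n i else n' i)" for i
  define wb where "wb i = (if i < r then n' i else n i)" for i
  have nbnb: "\<forall>i<m. \<forall>j<m. bl (nb i) (nb j) = 0"
    using nn n'n' nn' n'n by (auto simp: nb_def)
  have nbwb: "\<forall>i<m. \<forall>j<m. bl (nb i) (wb j) = (if i = j then 1 else 0)"
    using nn n'n' nn' n'n by (auto simp: nb_def wb_def)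
  have bnb: "\<forall>i<m. ac \<beta> (nb i) = 0" using bn bn' by (auto simp: nb_def)
  have uB: "\<exists>c. \<psi> = c *s \<beta>" if "\<forall>i<m. ac \<psi> (nb i) = 0" for \<psi>
    using uniq[OF nbnb nbwb b0 bnb] that by blast
  have unb: "bl u (nb i) = 0" if "i < m" for i using un un' that by (auto simp: nb_def)
  have rlt: "r < m"
  proof (rule ccontr)
    assume "\<not> r < m"
    then have "\<forall>i<m. ac \<beta> (n i) = 0" using bn by auto
    then show False using uA nonprop by blast
  qed
  obtain \<epsilon> where eps: "au = \<epsilon> *s \<alpha>"
  proof -
    have "\<forall>i<m. ac au (n i) = 0" using un an by (simp add: au_def cl_anti)
    then show ?thesis using uA that by blast
  qed
  have eps2: "\<epsilon> * \<epsilon> = -1"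
  proof -
    have 1: "ac au u = (- 1) *s \<alpha>" using cl_sq[of \<alpha> u] uu by (simp add: au_def)
    have 2: "ac au u = (\<epsilon> * \<epsilon>) *s \<alpha>" by (simp add: eps act_scale1 au_def[symmetric] vector_smult_assoc)
    have "(\<epsilon> * \<epsilon>) *s \<alpha> = (- 1) *s \<alpha>" using 2 1 by (rule trans[OF sym])
    then show ?thesis using a0 vec.scale_cancel_right by blast
  qed
  obtain \<epsilon>' where eps': "bu = \<epsilon>' *s \<beta>"
  proof -
    have "\<forall>i<m. ac bu (nb i) = 0" using unb bnb by (simp add: bu_def cl_anti)
    then show ?thesis using uB that by blast
  qed
  have a_n: "ac (a i) (n j) = (if i = j then (-2) *s \<alpha> else 0)" if "i < m" "j < m" for i j
    using cl_gen[of \<alpha> "n' i" "n j"] n'n[OF that] an[OF that(2)] by (simp add: a_def)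
  have au_n: "ac au (n j) = 0" if "j < m" for j
    using cl_anti[of u "n j" \<alpha>] un that an by (simp add: au_def)
  have chain: "ac (ac x (n j)) (n' j) = (-2) *s x" if "ac x (n' j) = 0" "j < m" for x j
    using cl_gen[of x "n j" "n' j"] nn' that by simp
  have b_n'_other: "ac (b p) (n' j) = 0" if "p < m" "j < m" "r \<le> j" "p \<noteq> j" for p j
    using cl_anti[of "n p" "n' j" \<beta>] nn' bn' that by (simp add: b_def)
  have b_n'_same: "ac (b p) (n' p) = (-2) *s \<beta>" if "p < m" "r \<le> p" for p
    using chain[of \<beta> p] bn' that by (simp add: b_def)
  have F1: "\<forall>A B. contr g \<gamma> \<alpha> \<beta> $ A $ B = \<alpha> $ A * \<beta> $ B - 2 * \<beta> $ A * \<alpha> $ B" if r1: "r + 1 = m"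
  proof -
    define p where "p = r"
    have pm: "p < m" "m = Suc p" using r1 by (auto simp: p_def)
    obtain lm0 where lam: "b p = lm0 *s \<alpha>"
    proof -
      have "\<forall>i<m. ac (b p) (n i) = 0"
      proof (intro allI impI)
        fix i assume i: "i < m"
        show "ac (b p) (n i) = 0"
        proof (cases "i = p")
          case True then show ?thesis using cl_null nn pm by (simp add: b_def)
        next
          case False then have "i < r" using i pm p_def by simp
          then show ?thesis using cl_anti[of "n p" "n i" \<beta>] nn pm i bn by (simp add: b_def)
        qed
      qed
      then show ?thesis using uA that by blast
    qed
    obtain \<mu> where mu: "a p = \<mu> *s \<beta>"
    proof -
      have "\<forall>i<m. ac (a p) (nb i) = 0"
      proof (intro allI impI)
        fix i assume i: "i < m"
        show "ac (a p) (nb i) = 0"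
        proof (cases "i = p")
          case True then show ?thesis using cl_null n'n' pm by (simp add: a_def nb_def p_def)
        next
          case False then have "i < r" using i pm p_def by simp
          then show ?thesis using a_n[of p i] False pm i by (simp add: nb_def)
        qed
      qed
      then show ?thesis using uB that by blast
    qed
    have lm: "\<mu> * lm0 = -2"
    proof -
      have 1: "ac (a p) (n p) = (-2) *s \<alpha>" using a_n pm by simp
      have 2: "ac (a p) (n p) = (\<mu> * lm0) *s \<alpha>"
        by (simp add: mu act_scale1 b_def[symmetric] lam vector_smult_assoc)
      have "(\<mu> * lm0) *s \<alpha> = (-2) *s \<alpha>" using 2 1 by (rule trans[OF sym])
      then show ?thesis using a0 vec.scale_cancel_right by blast
    qed
    have ee: "\<epsilon>' = - \<epsilon>"
    proof -
      have "ac (a p) u = - ac au (n' p)"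
        using cl_anti[of "n' p" u \<alpha>] n'u pm by (simp add: a_def au_def)
      also have "\<dots> = (- \<epsilon> * \<mu>) *s \<beta>" by (simp add: eps act_scale1 a_def[symmetric] mu vector_smult_assoc)
      finally have 1: "ac (a p) u = (- \<epsilon> * \<mu>) *s \<beta>" .
      have 2: "ac (a p) u = (\<mu> * \<epsilon>') *s \<beta>" by (simp add: mu act_scale1 bu_def[symmetric] eps' vector_smult_assoc)
      have "(\<mu> * \<epsilon>') *s \<beta> = (- \<epsilon> * \<mu>) *s \<beta>" using 2 1 by (rule trans[OF sym])
      then have "\<mu> * \<epsilon>' = - \<epsilon> * \<mu>" using b0 vec.scale_cancel_right by blast
      moreover have "\<mu> \<noteq> 0" using lm by auto
      ultimately show ?thesis by (metis minus_mult_left mult.commute mult_cancel_left)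
    qed
    show ?thesis
    proof (intro allI)
      fix A B
      have "(\<Sum>i<m. a i $ A * b i $ B) = a p $ A * b p $ B"
        using bn pm by (simp add: b_def p_def)
      then show "contr g \<gamma> \<alpha> \<beta> $ A $ B = \<alpha> $ A * \<beta> $ B - 2 * \<beta> $ A * \<alpha> $ B"
      proof -
        have "contr g \<gamma> \<alpha> \<beta> $ A $ B = (\<mu> * lm0) * (\<beta> $ A * \<alpha> $ B) - (\<epsilon> * \<epsilon>) * (\<alpha> $ A * \<beta> $ B)"
          unfolding contr_eq using \<open>(\<Sum>i<m. a i $ A * b i $ B) = a p $ A * b p $ B\<close>
          by (simp add: mu lam eps eps' ee)
        then show ?thesis using lm eps2 by simp
      qed
    qed
  qed

  have F2: "\<forall>A B. contr g \<gamma> \<alpha> \<beta> $ A $ B + contr g \<gamma> \<alpha> \<beta> $ B $ A = - (\<alpha> $ A * \<beta> $ B + \<alpha> $ B * \<beta> $ A)"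
    if r2: "r + 2 = m"
  proof -
    define p where "p = r"
    define q where "q = Suc r"
    have pm: "p < m" "q < m" "p \<noteq> q" "m = Suc (Suc p)" using r2 by (auto simp: p_def q_def)
    define \<psi> where "\<psi> = ac (a p) (n' q)"
    obtain c where c: "\<psi> = c *s \<beta>"
    proof -
      have "\<forall>i<m. ac \<psi> (nb i) = 0"
      proof (intro allI impI)
        fix i assume i: "i < m"
        show "ac \<psi> (nb i) = 0"
        proof (cases "i < r")
          case True
          have "ac (a p) (n i) = 0" using a_n[of p i] True pm i by (simp add: p_def)
          moreover have "bl (n' q) (n i) = 0" using n'n[of q i] True pm i by (simp add: q_def)
          ultimately show ?thesis using cl_anti[of "n' q" "n i" "a p"] True by (simp add: \<psi>_def nb_def)
        next
          case False
          then have "i = p \<or> i = q" using i pm by (auto simp: p_def q_def)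
          then show ?thesis
          proof
            assume ip: "i = p"
            have "ac (a p) (n' p) = 0" using cl_null n'n' pm by (simp add: a_def)
            moreover have "bl (n' q) (n' p) = 0" using n'n' pm by simp
            ultimately show ?thesis using cl_anti[of "n' q" "n' p" "a p"] ip False by (simp add: \<psi>_def nb_def)
          next
            assume iq: "i = q"
            show ?thesis using cl_null n'n' pm iq False by (simp add: \<psi>_def nb_def)
          qed
        qed
      qed
      then show ?thesis using uB that by blast
    qed
    have psi_nq: "ac \<psi> (n q) = (-2) *s a p"
      using cl_gen[of "a p" "n' q" "n q"] n'n[of q q] a_n[of p q] pm by (simp add: \<psi>_def)
    have psi_np: "ac \<psi> (n p) = 2 *s a q"
    proof -
      have "ac \<psi> (n p) = - ac (ac (a p) (n p)) (n' q)"
        using cl_anti[of "n' q" "n p" "a p"] n'n[of q p] pm by (simp add: \<psi>_def)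
      also have "\<dots> = 2 *s a q" using a_n[of p p] pm by (simp add: act_scale1 act_neg1 a_def)
      finally show ?thesis .
    qed
    have c0: "c \<noteq> 0"
    proof
      assume "c = 0"
      then have "a p = 0" using psi_nq c by (simp add: vec.scale_eq_0_iff)
      then have "ac (a p) (n p) = 0" by simp
      then show False using a_n[of p p] pm a0 by (simp add: vec.scale_eq_0_iff)
    qed
    have bp: "b p = (2 / c) *s a q"
    proof -
      have "c *s b p = 2 *s a q" using psi_np c by (simp add: act_scale1 b_def)
      then have "(1/c) *s (c *s b p) = (1/c) *s (2 *s a q)" by simp
      then show ?thesis using c0 by (simp add: vector_smult_assoc)
    qed
    have bq: "b q = (-2 / c) *s a p"
    proof -
      have "c *s b q = (-2) *s a p" using psi_nq c by (simp add: act_scale1 b_def)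
      then have "(1/c) *s (c *s b q) = (1/c) *s ((-2) *s a p)" by simp
      then show ?thesis using c0 by (simp add: vector_smult_assoc)
    qed
    have ee: "\<epsilon>' = \<epsilon>"
    proof -
      have apu: "ac (a p) u = (- \<epsilon>) *s a p"
        using cl_anti[of "n' p" u \<alpha>] n'u pm by (simp add: a_def au_def[symmetric] eps act_scale1)
      have "ac \<psi> u = - ac (ac (a p) u) (n' q)"
        using cl_anti[of "n' q" u "a p"] n'u pm by (simp add: \<psi>_def)
      also have "\<dots> = \<epsilon> *s \<psi>" by (simp add: apu act_scale1 act_neg1 \<psi>_def)
      finally have 1: "ac \<psi> u = \<epsilon> *s \<psi>" .
      have 2: "ac \<psi> u = \<epsilon>' *s \<psi>" by (simp add: c act_scale1 bu_def[symmetric] eps' vector_smult_assoc mult.commute)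
      have "\<psi> \<noteq> 0" using c c0 b0 by (simp add: vec.scale_eq_0_iff)
      moreover have "\<epsilon>' *s \<psi> = \<epsilon> *s \<psi>" using 2 1 by (rule trans[OF sym])
      ultimately show ?thesis using vec.scale_cancel_right by blast
    qed
    have sumab: "(\<Sum>i<m. a i $ A * b i $ B) = a p $ A * b p $ B + a q $ A * b q $ B" for A B
      using bn pm by (simp add: b_def p_def q_def)
    show ?thesis
    proof (intro allI)
      fix A B
      have "contr g \<gamma> \<alpha> \<beta> $ A $ B + contr g \<gamma> \<alpha> \<beta> $ B $ A
          = (\<epsilon> * \<epsilon>) * (\<alpha> $ A * \<beta> $ B + \<alpha> $ B * \<beta> $ A)"
        unfolding contr_eq sumab by (simp add: bp bq eps eps' ee) (simp add: algebra_simps)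
      then show "contr g \<gamma> \<alpha> \<beta> $ A $ B + contr g \<gamma> \<alpha> \<beta> $ B $ A = - (\<alpha> $ A * \<beta> $ B + \<alpha> $ B * \<beta> $ A)"
        using eps2 by simp
    qed
  qed

  have sum_a: "(\<Sum>i<m. ac (a i) (n p) $ A * Y i) = -2 * \<alpha> $ A * Y p" if "p < m" for p A Y
  proof -
    have "(\<Sum>i<m. ac (a i) (n p) $ A * Y i) = (\<Sum>i<m. (-2 * \<alpha> $ A * Y i) * (if i = p then 1 else 0))"
      by (rule sum.cong) (use a_n that in auto)
    then show ?thesis using that by (simp only: sum_delta_nat') simp
  qed
  have sum_a2: "(\<Sum>i<m. Y i * ac (a i) (n p) $ A) = Y p * (-2 * \<alpha> $ A)" if "p < m" for p A Y
  proof -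
    have "(\<Sum>i<m. Y i * ac (a i) (n p) $ A) = (\<Sum>i<m. (-2 * \<alpha> $ A * Y i) * (if i = p then 1 else 0))"
      by (rule sum.cong) (use a_n that in auto)
    then show ?thesis using that by (simp only: sum_delta_nat') simp
  qed
  have B1: "r + 1 = m" if hyp: "\<forall>A B. contr g \<gamma> \<alpha> \<beta> $ A $ B = \<alpha> $ A * \<beta> $ B - 2 * \<beta> $ A * \<alpha> $ B"
  proof (rule ccontr)
    assume "r + 1 \<noteq> m"
    then have rq: "r + 1 < m" using rlt by simp
    define p where "p = r"
    define q where "q = Suc r"
    have pm: "p < m" "q < m" "p \<noteq> q" "r \<le> p" "r \<le> q" using rq by (auto simp: p_def q_def)
    define x where "x = cat m a (\<lambda>j. if j = 0 then au else if j = 1 then \<alpha> else \<beta>)"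
    define y where "y = cat m b (\<lambda>j. if j = 0 then bu else if j = 1 then - \<beta> else 2 *s \<alpha>)"
    have split3: "(\<Sum>l<m+3. F l) = (\<Sum>l<m. F l) + F m + F (m+1) + F (m+2)" for F :: "nat \<Rightarrow> complex"
      by (simp add: sum_lessThan_add numeral_3_eq_3)
    have T0: "\<forall>A B. (\<Sum>l\<in>{..<m+3}. x l $ A * y l $ B) = 0"
    proof (intro allI)
      fix A B
      have "(\<Sum>l\<in>{..<m+3}. x l $ A * y l $ B) = contr g \<gamma> \<alpha> \<beta> $ A $ B - \<alpha> $ A * \<beta> $ B + 2 * \<beta> $ A * \<alpha> $ B"
        unfolding split3 contr_eq by (simp add: x_def y_def cat_def)
      then show "(\<Sum>l\<in>{..<m+3}. x l $ A * y l $ B) = 0" using hyp by simp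
    qed
    have T1: "\<forall>A B. (\<Sum>l\<in>{..<m+3}. ac (x l) (n p) $ A * y l $ B) = 0"
      by (rule slot1[OF _ T0]) simp
    have "\<forall>A B. \<alpha> $ A * b p $ B = b p $ A * \<alpha> $ B"
    proof (intro allI)
      fix A B
      have "(\<Sum>l\<in>{..<m+3}. ac (x l) (n p) $ A * y l $ B) = -2 * \<alpha> $ A * b p $ B + 2 * b p $ A * \<alpha> $ B"
        unfolding split3 using sum_a[OF pm(1), of A "\<lambda>i. b i $ B"] au_n[OF pm(1)] an[OF pm(1)]
        by (simp add: x_def y_def cat_def b_def[symmetric])
      then show "\<alpha> $ A * b p $ B = b p $ A * \<alpha> $ B" using T1 by simp
    qed
    then obtain lm0 where lam: "b p = lm0 *s \<alpha>" using rank1_sym a0 by blast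
    have x1q: "ac (b p) (n' q) = 0" using b_n'_other pm by simp
    have "ac (b p) (n q) = 0" using an[OF pm(2)] by (simp add: lam act_scale1)
    then have "(-2) *s b p = 0" using chain[OF x1q pm(2)] by simp
    then have "b p = 0" by (simp add: vec.scale_eq_0_iff)
    then have "(-2) *s \<beta> = 0" using b_n'_same[OF pm(1) pm(4)] by simp
    then show False using b0 by (simp add: vec.scale_eq_0_iff)
  qed

  have B2: "m \<le> r + 2" if hyp: "\<forall>A B. (contr g \<gamma> \<alpha> \<beta> $ A $ B + contr g \<gamma> \<alpha> \<beta> $ B $ A) / 2
                     = - ((\<alpha> $ A * \<beta> $ B + \<alpha> $ B * \<beta> $ A) / 2)"
  proof (rule ccontr)
    assume "\<not> m \<le> r + 2"
    then have rs: "r + 2 < m" by simp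
    define p where "p = r"
    define q where "q = Suc r"
    define t where "t = Suc (Suc r)"
    have pm: "p < m" "q < m" "t < m" "p \<noteq> q" "q \<noteq> t" "p \<noteq> t" "r \<le> p" "r \<le> q" "r \<le> t"
      using rs by (auto simp: p_def q_def t_def)
    define x where "x = cat m a (cat m b (\<lambda>j. if j = 0 then au else if j = 1 then bu else if j = 2 then \<alpha> else \<beta>))"
    define y where "y = cat m b (cat m a (\<lambda>j. if j = 0 then bu else if j = 1 then au else if j = 2 then \<beta> else \<alpha>))"
    have split4: "(\<Sum>l<m+(m+4). F l) = (\<Sum>l<m. F l) + (\<Sum>l<m. F (m+l)) + F (m+m) + F (m+m+1) + F (m+m+2) + F (m+m+3)"
      for F :: "nat \<Rightarrow> complex"
      by (simp add: sum_lessThan_add numeral_3_eq_3 eval_nat_numeral add.assoc)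
    have T0: "\<forall>A B. (\<Sum>l\<in>{..<m+(m+4)}. x l $ A * y l $ B) = 0"
    proof (intro allI)
      fix A B
      have "(\<Sum>l\<in>{..<m+(m+4)}. x l $ A * y l $ B) = contr g \<gamma> \<alpha> \<beta> $ A $ B + contr g \<gamma> \<alpha> \<beta> $ B $ A
           + (\<alpha> $ A * \<beta> $ B + \<alpha> $ B * \<beta> $ A)"
        unfolding split4 contr_eq by (simp add: x_def y_def cat_def mult.commute)
      then show "(\<Sum>l\<in>{..<m+(m+4)}. x l $ A * y l $ B) = 0" using hyp[rule_format, of A B] by simp
    qed
    have T1: "\<forall>A B. (\<Sum>l\<in>{..<m+(m+4)}. ac (x l) (n p) $ A * y l $ B) = 0"
      by (rule slot1[OF _ T0]) simp
    have T2: "\<forall>A B. (\<Sum>l\<in>{..<m+(m+4)}. ac (x l) (n p) $ A * ac (y l) (n q) $ B) = 0"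
      by (rule slot2[OF _ T1]) simp
    define w1 where "w1 = ac (b p) (n q)"
    have bqp: "ac (b q) (n p) = - w1"
      using cl_anti[of "n q" "n p" \<beta>] nn pm by (simp add: b_def w1_def)
    have "\<forall>A B. \<alpha> $ A * w1 $ B = w1 $ A * \<alpha> $ B"
    proof (intro allI)
      fix A B
      have "(\<Sum>l\<in>{..<m+(m+4)}. ac (x l) (n p) $ A * ac (y l) (n q) $ B)
          = -2 * \<alpha> $ A * w1 $ B + (- w1 $ A) * (-2 * \<alpha> $ B)"
        unfolding split4
        using sum_a[OF pm(1), of A "\<lambda>i. ac (b i) (n q) $ B"] sum_a2[OF pm(2), where A=B and Y="\<lambda>i. ac (b i) (n p) $ A"]
          au_n[OF pm(1)] au_n[OF pm(2)] an[OF pm(1)] an[OF pm(2)] bqp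
        by (simp add: x_def y_def cat_def w1_def)
      then show "\<alpha> $ A * w1 $ B = w1 $ A * \<alpha> $ B" using T2 by simp
    qed
    then obtain lm0 where lam: "w1 = lm0 *s \<alpha>" using rank1_sym a0 by blast
    have x1q: "ac (b p) (n' q) = 0" using b_n'_other pm by simp
    have x1t: "ac (b p) (n' t) = 0" using b_n'_other pm by simp
    have x2t: "ac w1 (n' t) = 0"
      using cl_anti[of "n q" "n' t" "b p"] nn' pm x1t by (simp add: w1_def)
    have "ac w1 (n t) = 0" using an[OF pm(3)] by (simp add: lam act_scale1)
    then have "(-2) *s w1 = 0" using chain[OF x2t pm(3)] by simp
    then have "w1 = 0" by (simp add: vec.scale_eq_0_iff)
    then have "(-2) *s b p = 0" using chain[OF x1q pm(2)] by (simp add: w1_def)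
    then have "b p = 0" by (simp add: vec.scale_eq_0_iff)
    then have "(-2) *s \<beta> = 0" using b_n'_same[OF pm(1) pm(7)] by simp
    then show False using b0 by (simp add: vec.scale_eq_0_iff)
  qed

  have alg: "\<forall>A B. \<alpha> $ A * \<beta> $ B - 2 * \<beta> $ A * \<alpha> $ B
                     = - ((\<alpha> $ A * \<beta> $ B + \<alpha> $ B * \<beta> $ A) / 2)
                       + 3 * ((\<alpha> $ A * \<beta> $ B - \<alpha> $ B * \<beta> $ A) / 2)"
    by (simp add: field_simps)
  have P1: "(totally_null g (PA \<inter> PB) \<and> r = m - 1)
          \<longleftrightarrow> (\<forall>A B. contr g \<gamma> \<alpha> \<beta> $ A $ B = \<alpha> $ A * \<beta> $ B - 2 * \<beta> $ A * \<alpha> $ B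
                   \<and> \<alpha> $ A * \<beta> $ B - 2 * \<beta> $ A * \<alpha> $ B
                     = - ((\<alpha> $ A * \<beta> $ B + \<alpha> $ B * \<beta> $ A) / 2)
                       + 3 * ((\<alpha> $ A * \<beta> $ B - \<alpha> $ B * \<beta> $ A) / 2))"
  proof
    assume "totally_null g (PA \<inter> PB) \<and> r = m - 1"
    then have "r + 1 = m" using rlt by simp
    then show "\<forall>A B. contr g \<gamma> \<alpha> \<beta> $ A $ B = \<alpha> $ A * \<beta> $ B - 2 * \<beta> $ A * \<alpha> $ B
                   \<and> \<alpha> $ A * \<beta> $ B - 2 * \<beta> $ A * \<alpha> $ B
                     = - ((\<alpha> $ A * \<beta> $ B + \<alpha> $ B * \<beta> $ A) / 2)
                       + 3 * ((\<alpha> $ A * \<beta> $ B - \<alpha> $ B * \<beta> $ A) / 2)"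
      using F1 alg by blast
  next
    assume h: "\<forall>A B. contr g \<gamma> \<alpha> \<beta> $ A $ B = \<alpha> $ A * \<beta> $ B - 2 * \<beta> $ A * \<alpha> $ B
                   \<and> \<alpha> $ A * \<beta> $ B - 2 * \<beta> $ A * \<alpha> $ B
                     = - ((\<alpha> $ A * \<beta> $ B + \<alpha> $ B * \<beta> $ A) / 2)
                       + 3 * ((\<alpha> $ A * \<beta> $ B - \<alpha> $ B * \<beta> $ A) / 2)"
    then have "r + 1 = m" using B1 by blast
    then show "totally_null g (PA \<inter> PB) \<and> r = m - 1" using tn by simp
  qed
  have P2: "(\<exists>k\<in>{1, 2}. k \<le> m \<and> totally_null g (PA \<inter> PB) \<and> r = m - k)
          \<longleftrightarrow> (\<forall>A B. (contr g \<gamma> \<alpha> \<beta> $ A $ B + contr g \<gamma> \<alpha> \<beta> $ B $ A) / 2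
                     = - ((\<alpha> $ A * \<beta> $ B + \<alpha> $ B * \<beta> $ A) / 2))"
  proof
    assume "\<exists>k\<in>{1, 2}. k \<le> m \<and> totally_null g (PA \<inter> PB) \<and> r = m - k"
    then obtain k where k: "k = 1 \<or> k = 2" "k \<le> m" "r = m - k" by auto
    show "\<forall>A B. (contr g \<gamma> \<alpha> \<beta> $ A $ B + contr g \<gamma> \<alpha> \<beta> $ B $ A) / 2
                     = - ((\<alpha> $ A * \<beta> $ B + \<alpha> $ B * \<beta> $ A) / 2)"
    proof (cases "k = 1")
      case True
      then have "r + 1 = m" using k by simp
      then have c: "\<forall>A B. contr g \<gamma> \<alpha> \<beta> $ A $ B = \<alpha> $ A * \<beta> $ B - 2 * \<beta> $ A * \<alpha> $ B" using F1 by blast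
      show ?thesis
      proof (intro allI)
        fix A B
        show "(contr g \<gamma> \<alpha> \<beta> $ A $ B + contr g \<gamma> \<alpha> \<beta> $ B $ A) / 2 = - ((\<alpha> $ A * \<beta> $ B + \<alpha> $ B * \<beta> $ A) / 2)"
          unfolding c[rule_format] by (simp add: field_simps)
      qed
    next
      case False
      then have "r + 2 = m" using k by simp
      then have c: "\<forall>A B. contr g \<gamma> \<alpha> \<beta> $ A $ B + contr g \<gamma> \<alpha> \<beta> $ B $ A = - (\<alpha> $ A * \<beta> $ B + \<alpha> $ B * \<beta> $ A)"
        using F2 by blast
      show ?thesis unfolding c[rule_format] by (simp add: field_simps)
    qed
  next
    assume h: "\<forall>A B. (contr g \<gamma> \<alpha> \<beta> $ A $ B + contr g \<gamma> \<alpha> \<beta> $ B $ A) / 2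
                     = - ((\<alpha> $ A * \<beta> $ B + \<alpha> $ B * \<beta> $ A) / 2)"
    then have "m \<le> r + 2" using B2 by blast
    then have "m - r \<in> {1, 2}" "m - r \<le> m" "r = m - (m - r)" using rlt by auto
    then show "\<exists>k\<in>{1, 2}. k \<le> m \<and> totally_null g (PA \<inter> PB) \<and> r = m - k" using tn by blast
  qed
  show ?thesis
    unfolding PA_def[symmetric] PB_def[symmetric] r_def[symmetric] using P1 P2 by blast
qed

end

theorem proposition2p10:
  fixes m :: nat
    and g :: "complex^'i^'i"
    and \<gamma> :: "'i \<Rightarrow> complex^'j^'j"
    and \<alpha> \<beta> :: "complex^'j"
  assumes dimV: "CARD('i) = 2 * m + 1"
    and dimS: "CARD('j) = 2 ^ m"
    and g_sym: "transpose g = g"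
    and g_nondeg: "invertible g"
    and cliff: "clifford_rel g \<gamma>"
    and pure_a: "pure_spinor \<gamma> m \<alpha>"
    and pure_b: "pure_spinor \<gamma> m \<beta>"
    and nonprop: "\<not> (\<exists>c. \<beta> = c *s \<alpha>)"
  shows "((totally_null g (gamma_plane \<gamma> \<alpha> \<inter> gamma_plane \<gamma> \<beta>) \<and>
            vec.dim (gamma_plane \<gamma> \<alpha> \<inter> gamma_plane \<gamma> \<beta>) = m - 1)
          \<longleftrightarrow> (\<forall>A B. contr g \<gamma> \<alpha> \<beta> $ A $ B = \<alpha> $ A * \<beta> $ B - 2 * \<beta> $ A * \<alpha> $ B
                   \<and> \<alpha> $ A * \<beta> $ B - 2 * \<beta> $ A * \<alpha> $ B
                     = - ((\<alpha> $ A * \<beta> $ B + \<alpha> $ B * \<beta> $ A) / 2)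
                       + 3 * ((\<alpha> $ A * \<beta> $ B - \<alpha> $ B * \<beta> $ A) / 2)))
       \<and> ((\<exists>k\<in>{1, 2}. k \<le> m \<and> totally_null g (gamma_plane \<gamma> \<alpha> \<inter> gamma_plane \<gamma> \<beta>) \<and>
            vec.dim (gamma_plane \<gamma> \<alpha> \<inter> gamma_plane \<gamma> \<beta>) = m - k)
          \<longleftrightarrow> (\<forall>A B. (contr g \<gamma> \<alpha> \<beta> $ A $ B + contr g \<gamma> \<alpha> \<beta> $ B $ A) / 2
                     = - ((\<alpha> $ A * \<beta> $ B + \<alpha> $ B * \<beta> $ A) / 2)))"
proof -
  interpret spin m g \<gamma>
    using dimV dimS g_sym g_nondeg cliff by unfold_locales
  show ?thesis using main[OF pure_a pure_b nonprop] .
qed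

end
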